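(* Let $f\colon X\to Y$ be a morphism in a pre-Hilbert $*$-category. The following are equivalent: (i) $f$ is strictly contractive; (ii) $f$ has a codilation $(S,s_1,s_2)$ that is a coproduct (i.e. $(S,s_1,s_2)$ is a coproduct of $X$ and $Y$); (iii) $\begin{bmatrix}1 & f^*\\ f & 1\end{bmatrix}\succ 0$ as an endomorphism of $X\oplus Y$. Furthermore, if these equivalent conditions hold, then any codilation $(S,s_1,s_2)$ of $f$ that is a coproduct is a codilator of $f$.
   Context: A $*$-category is a category with a choice of $f^*\colon Y\to X$ for each $f\colon X\to Y$ such that $1^*=1$, $(gf)^*=f^*g^*$, $(f^* )^*=f$; $f$ is an isometry if $f^*f=1$. A pre-Hilbert $*$-category is a $*$-category with (R1) a zero object, (R2) orthonormal biproducts of all pairs of objects (biproducts $(X,s_1,r_1,s_2,r_2)$ with $r_k=s_k^*$; matrices of morphisms between biproducts are taken with respect to these), (R3) an isometric kernel for every morphism, and (R4) every diagonal $\Delta\colon X\to X\oplus X$ a kernel of some morphism. Such a category is additive. For Hermitian endomorphisms $a,b$ of $A$, $a\leq b$ means $b-a=y^*y$ for some $y\colon A\to Y$; $a\prec b$ (equivalently $b\succ a$) means $a\leq b$ and $b-a$ is invertible. A morphism $f$ is strictly contractive if $f^*f\prec 1$. A codilation of $f\colon X\to Y$ is a cospan $(T,t_1,t_2)$ with $t_1\colon X\to T$, $t_2\colon Y\to T$ isometries and $t_2^*t_1=f$. A codilator of $f$ is a codilation $(S,s_1,s_2)$ such that for every codilation $(T,t_1,t_2)$ of $f$ there is a unique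 isometry $t\colon S\to T$ with $ts_1=t_1$ and $ts_2=t_2$. *)

theory Defs
  imports Main
begin

text \<open>A (possibly large) category with a chosen involution, given by explicit data.
  Objects have type 'o, morphisms type 'm; cp g f is the composite g o f.\<close>

record ('o, 'm) scat =
  Ob  :: "'o set"
  Ar  :: "'m set"
  dom :: "'m \<Rightarrow> 'o"
  cod :: "'m \<Rightarrow> 'o"
  cp  :: "'m \<Rightarrow> 'm \<Rightarrow> 'm"
  idt :: "'o \<Rightarrow> 'm"
  str :: "'m \<Rightarrow> 'm"

definition hom :: "('o, 'm) scat \<Rightarrow> 'o \<Rightarrow> 'o \<Rightarrow> 'm set" where
  "hom C X Y = {f \<in> Ar C. dom C f = X \<and> cod C f = Y}"

definition is_category :: "('o, 'm) scat \<Rightarrow> bool" where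
  "is_category C \<longleftrightarrow>
     (\<forall>f \<in> Ar C. dom C f \<in> Ob C \<and> cod C f \<in> Ob C) \<and>
     (\<forall>X \<in> Ob C. idt C X \<in> hom C X X) \<and>
     (\<forall>X Y Z f g. f \<in> hom C X Y \<and> g \<in> hom C Y Z \<longrightarrow> cp C g f \<in> hom C X Z) \<and>
     (\<forall>X Y f. f \<in> hom C X Y \<longrightarrow> cp C f (idt C X) = f \<and> cp C (idt C Y) f = f) \<and>
     (\<forall>W X Y Z f g h. f \<in> hom C W X \<and> g \<in> hom C X Y \<and> h \<in> hom C Y Z \<longrightarrow>
        cp C h (cp C g f) = cp C (cp C h g) f)"

definition is_star_category :: "('o, 'm) scat \<Rightarrow> bool" where
  "is_star_category C \<longleftrightarrow> is_category C \<and>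
     (\<forall>X Y f. f \<in> hom C X Y \<longrightarrow> str C f \<in> hom C Y X) \<and>
     (\<forall>X \<in> Ob C. str C (idt C X) = idt C X) \<and>
     (\<forall>X Y Z f g. f \<in> hom C X Y \<and> g \<in> hom C Y Z \<longrightarrow>
        str C (cp C g f) = cp C (str C f) (str C g)) \<and>
     (\<forall>f \<in> Ar C. str C (str C f) = f)"

definition isometry :: "('o, 'm) scat \<Rightarrow> 'm \<Rightarrow> bool" where
  "isometry C f \<longleftrightarrow> f \<in> Ar C \<and> cp C (str C f) f = idt C (dom C f)"

definition invertible :: "('o, 'm) scat \<Rightarrow> 'm \<Rightarrow> bool" where
  "invertible C f \<longleftrightarrow> f \<in> Ar C \<and>
     (\<exists>g \<in> hom C (cod C f) (dom C f). cp C g f = idt C (dom C f) \<and> cp C f g = idt C (cod C f))"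

definition hermitian :: "('o, 'm) scat \<Rightarrow> 'm \<Rightarrow> bool" where
  "hermitian C a \<longleftrightarrow> a \<in> hom C (dom C a) (dom C a) \<and> str C a = a"

definition zero_obj :: "('o, 'm) scat \<Rightarrow> 'o \<Rightarrow> bool" where
  "zero_obj C Z \<longleftrightarrow> Z \<in> Ob C \<and>
     (\<forall>X \<in> Ob C. (\<exists>!f. f \<in> hom C X Z) \<and> (\<exists>!f. f \<in> hom C Z X))"

definition is_zero :: "('o, 'm) scat \<Rightarrow> 'm \<Rightarrow> bool" where
  "is_zero C f \<longleftrightarrow> (\<exists>Z a b. zero_obj C Z \<and> a \<in> hom C (dom C f) Z \<and>
      b \<in> hom C Z (cod C f) \<and> f = cp C b a)"

definition zero :: "('o, 'm) scat \<Rightarrow> 'o \<Rightarrow> 'o \<Rightarrow> 'm" where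
  "zero C X Y = (THE z. z \<in> hom C X Y \<and> is_zero C z)"

definition is_product :: "('o, 'm) scat \<Rightarrow> 'o \<Rightarrow> 'o \<Rightarrow> 'o \<Rightarrow> 'm \<Rightarrow> 'm \<Rightarrow> bool" where
  "is_product C A B P r1 r2 \<longleftrightarrow> P \<in> Ob C \<and> r1 \<in> hom C P A \<and> r2 \<in> hom C P B \<and>
     (\<forall>Z g1 g2. g1 \<in> hom C Z A \<and> g2 \<in> hom C Z B \<longrightarrow>
        (\<exists>!h. h \<in> hom C Z P \<and> cp C r1 h = g1 \<and> cp C r2 h = g2))"

definition is_coproduct :: "('o, 'm) scat \<Rightarrow> 'o \<Rightarrow> 'o \<Rightarrow> 'o \<Rightarrow> 'm \<Rightarrow> 'm \<Rightarrow> bool" where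
  "is_coproduct C A B S s1 s2 \<longleftrightarrow> S \<in> Ob C \<and> s1 \<in> hom C A S \<and> s2 \<in> hom C B S \<and>
     (\<forall>Z g1 g2. g1 \<in> hom C A Z \<and> g2 \<in> hom C B Z \<longrightarrow>
        (\<exists>!h. h \<in> hom C S Z \<and> cp C h s1 = g1 \<and> cp C h s2 = g2))"

definition is_biproduct ::
  "('o, 'm) scat \<Rightarrow> 'o \<Rightarrow> 'o \<Rightarrow> 'o \<Rightarrow> 'm \<Rightarrow> 'm \<Rightarrow> 'm \<Rightarrow> 'm \<Rightarrow> bool" where
  "is_biproduct C A B P s1 r1 s2 r2 \<longleftrightarrow>
     is_product C A B P r1 r2 \<and> is_coproduct C A B P s1 s2 \<and>
     cp C r1 s1 = idt C A \<and> cp C r2 s2 = idt C B \<and>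
     is_zero C (cp C r2 s1) \<and> is_zero C (cp C r1 s2)"

definition ortho_biproduct ::
  "('o, 'm) scat \<Rightarrow> 'o \<Rightarrow> 'o \<Rightarrow> 'o \<Rightarrow> 'm \<Rightarrow> 'm \<Rightarrow> 'm \<Rightarrow> 'm \<Rightarrow> bool" where
  "ortho_biproduct C A B P s1 r1 s2 r2 \<longleftrightarrow>
     is_biproduct C A B P s1 r1 s2 r2 \<and> r1 = str C s1 \<and> r2 = str C s2"

definition is_kernel :: "('o, 'm) scat \<Rightarrow> 'm \<Rightarrow> 'm \<Rightarrow> bool" where
  "is_kernel C k f \<longleftrightarrow> f \<in> Ar C \<and> k \<in> hom C (dom C k) (dom C f) \<and> is_zero C (cp C f k) \<and>
     (\<forall>Z g. g \<in> hom C Z (dom C f) \<and> is_zero C (cp C f g) \<longrightarrow>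
        (\<exists>!h. h \<in> hom C Z (dom C k) \<and> cp C k h = g))"

definition pre_hilbert :: "('o, 'm) scat \<Rightarrow> bool" where
  "pre_hilbert C \<longleftrightarrow> is_star_category C \<and>
     (\<exists>Z. zero_obj C Z) \<and>
     (\<forall>A \<in> Ob C. \<forall>B \<in> Ob C. \<exists>P s1 s2. ortho_biproduct C A B P s1 (str C s1) s2 (str C s2)) \<and>
     (\<forall>f \<in> Ar C. \<exists>k. is_kernel C k f \<and> isometry C k) \<and>
     (\<forall>X \<in> Ob C. \<forall>P s1 r1 s2 r2 d. ortho_biproduct C X X P s1 r1 s2 r2 \<and>
        d \<in> hom C X P \<and> cp C r1 d = idt C X \<and> cp C r2 d = idt C X \<longrightarrow>
        (\<exists>g. is_kernel C d g))"

text \<open>Sum of parallel morphisms f, g : X -> Y via a biproduct Y (+) Y: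
  h = nabla o <f,g>.  is_sum C f g h means h = f + g.\<close>
definition is_sum :: "('o, 'm) scat \<Rightarrow> 'm \<Rightarrow> 'm \<Rightarrow> 'm \<Rightarrow> bool" where
  "is_sum C f g h \<longleftrightarrow> (\<exists>X Y P s1 r1 s2 r2 p q.
     f \<in> hom C X Y \<and> g \<in> hom C X Y \<and> is_biproduct C Y Y P s1 r1 s2 r2 \<and>
     p \<in> hom C X P \<and> cp C r1 p = f \<and> cp C r2 p = g \<and>
     q \<in> hom C P Y \<and> cp C q s1 = idt C Y \<and> cp C q s2 = idt C Y \<and>
     h = cp C q p)"

definition herm_le :: "('o, 'm) scat \<Rightarrow> 'm \<Rightarrow> 'm \<Rightarrow> bool" where
  "herm_le C a b \<longleftrightarrow> hermitian C a \<and> hermitian C b \<and> dom C a = dom C b \<and>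
     (\<exists>W y. y \<in> hom C (dom C a) W \<and> is_sum C a (cp C (str C y) y) b)"

definition herm_lt :: "('o, 'm) scat \<Rightarrow> 'm \<Rightarrow> 'm \<Rightarrow> bool" where
  "herm_lt C a b \<longleftrightarrow> hermitian C a \<and> hermitian C b \<and> dom C a = dom C b \<and>
     (\<exists>W y. y \<in> hom C (dom C a) W \<and> is_sum C a (cp C (str C y) y) b \<and>
        invertible C (cp C (str C y) y))"

definition strictly_contractive :: "('o, 'm) scat \<Rightarrow> 'm \<Rightarrow> bool" where
  "strictly_contractive C f \<longleftrightarrow> herm_lt C (cp C (str C f) f) (idt C (dom C f))"

definition codilation :: "('o, 'm) scat \<Rightarrow> 'm \<Rightarrow> 'o \<Rightarrow> 'm \<Rightarrow> 'm \<Rightarrow> bool" where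
  "codilation C f T t1 t2 \<longleftrightarrow> t1 \<in> hom C (dom C f) T \<and> t2 \<in> hom C (cod C f) T \<and>
     isometry C t1 \<and> isometry C t2 \<and> cp C (str C t2) t1 = f"

definition codilator :: "('o, 'm) scat \<Rightarrow> 'm \<Rightarrow> 'o \<Rightarrow> 'm \<Rightarrow> 'm \<Rightarrow> bool" where
  "codilator C f S s1 s2 \<longleftrightarrow> codilation C f S s1 s2 \<and>
     (\<forall>T t1 t2. codilation C f T t1 t2 \<longrightarrow>
        (\<exists>!t. t \<in> hom C S T \<and> isometry C t \<and> cp C t s1 = t1 \<and> cp C t s2 = t2))"

end

theory Submission
  imports Defs
begin

locale phc =
  fixes C :: "('o,'m) scat"
  assumes PH: "pre_hilbert C"
begin

lemma SC: "is_star_category C" using PH by (simp add: pre_hilbert_def)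
lemma CAT: "is_category C" using SC by (simp add: is_star_category_def)

lemma hom_iff: "f \<in> hom C X Y \<longleftrightarrow> f \<in> Ar C \<and> dom C f = X \<and> cod C f = Y"
  by (simp add: hom_def)

lemma Ob_dom[simp]: "f \<in> Ar C \<Longrightarrow> dom C f \<in> Ob C"
  using CAT by (simp add: is_category_def)
lemma Ob_cod[simp]: "f \<in> Ar C \<Longrightarrow> cod C f \<in> Ob C"
  using CAT by (simp add: is_category_def)

lemma cp_hom: "f \<in> hom C X Y \<Longrightarrow> g \<in> hom C Y Z \<Longrightarrow> cp C g f \<in> hom C X Z"
  using CAT unfolding is_category_def by blast

lemma ar_cp[simp]: "f \<in> Ar C \<Longrightarrow> g \<in> Ar C \<Longrightarrow> dom C g = cod C f \<Longrightarrow> cp C g f \<in> Ar C"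
  using cp_hom[of f "dom C f" "cod C f" g "cod C g"] by (simp add: hom_iff)
lemma dom_cp[simp]: "f \<in> Ar C \<Longrightarrow> g \<in> Ar C \<Longrightarrow> dom C g = cod C f \<Longrightarrow> dom C (cp C g f) = dom C f"
  using cp_hom[of f "dom C f" "cod C f" g "cod C g"] by (simp add: hom_iff)
lemma cod_cp[simp]: "f \<in> Ar C \<Longrightarrow> g \<in> Ar C \<Longrightarrow> dom C g = cod C f \<Longrightarrow> cod C (cp C g f) = cod C g"
  using cp_hom[of f "dom C f" "cod C f" g "cod C g"] by (simp add: hom_iff)

lemma id_hom: "X \<in> Ob C \<Longrightarrow> idt C X \<in> hom C X X"
  using CAT unfolding is_category_def by blast
lemma ar_id[simp]: "X \<in> Ob C \<Longrightarrow> idt C X \<in> Ar C"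
  using id_hom by (simp add: hom_iff)
lemma dom_id[simp]: "X \<in> Ob C \<Longrightarrow> dom C (idt C X) = X"
  using id_hom by (simp add: hom_iff)
lemma cod_id[simp]: "X \<in> Ob C \<Longrightarrow> cod C (idt C X) = X"
  using id_hom by (simp add: hom_iff)
lemma cp_id_r[simp]: "f \<in> Ar C \<Longrightarrow> dom C f = X \<Longrightarrow> cp C f (idt C X) = f"
  using CAT unfolding is_category_def hom_iff by blast
lemma cp_id_l[simp]: "f \<in> Ar C \<Longrightarrow> cod C f = X \<Longrightarrow> cp C (idt C X) f = f"
  using CAT unfolding is_category_def hom_iff by blast
lemma assoc[simp]: "f \<in> Ar C \<Longrightarrow> g \<in> Ar C \<Longrightarrow> h \<in> Ar C \<Longrightarrow> dom C g = cod C f \<Longrightarrow>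
   dom C h = cod C g \<Longrightarrow> cp C (cp C h g) f = cp C h (cp C g f)"
proof -
  assume a: "f \<in> Ar C" "g \<in> Ar C" "h \<in> Ar C" "dom C g = cod C f" "dom C h = cod C g"
  have "f \<in> hom C (dom C f) (cod C f)" "g \<in> hom C (cod C f) (cod C g)" "h \<in> hom C (cod C g) (cod C h)"
    using a by (auto simp: hom_iff)
  then show ?thesis using CAT unfolding is_category_def by metis
qed

lemma st_hom: "f \<in> hom C X Y \<Longrightarrow> str C f \<in> hom C Y X"
  using SC unfolding is_star_category_def by blast
lemma ar_st[simp]: "f \<in> Ar C \<Longrightarrow> str C f \<in> Ar C"
  using st_hom[of f "dom C f" "cod C f"] by (simp add: hom_iff)
lemma dom_st[simp]: "f \<in> Ar C \<Longrightarrow> dom C (str C f) = cod C f"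
  using st_hom[of f "dom C f" "cod C f"] by (simp add: hom_iff)
lemma cod_st[simp]: "f \<in> Ar C \<Longrightarrow> cod C (str C f) = dom C f"
  using st_hom[of f "dom C f" "cod C f"] by (simp add: hom_iff)
lemma st_st[simp]: "f \<in> Ar C \<Longrightarrow> str C (str C f) = f"
  using SC unfolding is_star_category_def by blast
lemma st_id[simp]: "X \<in> Ob C \<Longrightarrow> str C (idt C X) = idt C X"
  using SC unfolding is_star_category_def by blast
lemma st_cp[simp]: "f \<in> Ar C \<Longrightarrow> g \<in> Ar C \<Longrightarrow> dom C g = cod C f \<Longrightarrow>
   str C (cp C g f) = cp C (str C f) (str C g)"
proof -
  assume a: "f \<in> Ar C" "g \<in> Ar C" "dom C g = cod C f"
  have "f \<in> hom C (dom C f) (cod C f)" "g \<in> hom C (cod C f) (cod C g)"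
    using a by (auto simp: hom_iff)
  then show ?thesis using SC unfolding is_star_category_def by metis
qed

lemma st_inj: "f \<in> Ar C \<Longrightarrow> g \<in> Ar C \<Longrightarrow> str C f = str C g \<Longrightarrow> f = g"
  by (metis st_st)

section \<open>Zero\<close>

definition "Z0 = (SOME Z. zero_obj C Z)"
lemma Z0: "zero_obj C Z0"
  unfolding Z0_def using PH unfolding pre_hilbert_def by (metis someI_ex)

lemma zo_to: "zero_obj C Z \<Longrightarrow> X \<in> Ob C \<Longrightarrow> a \<in> hom C X Z \<Longrightarrow> b \<in> hom C X Z \<Longrightarrow> a = b"
  unfolding zero_obj_def by blast
lemma zo_from: "zero_obj C Z \<Longrightarrow> X \<in> Ob C \<Longrightarrow> a \<in> hom C Z X \<Longrightarrow> b \<in> hom C Z X \<Longrightarrow> a = b"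
  unfolding zero_obj_def by blast
lemma zo_to_ex: "zero_obj C Z \<Longrightarrow> X \<in> Ob C \<Longrightarrow> \<exists>a. a \<in> hom C X Z"
  unfolding zero_obj_def by blast
lemma zo_from_ex: "zero_obj C Z \<Longrightarrow> X \<in> Ob C \<Longrightarrow> \<exists>a. a \<in> hom C Z X"
  unfolding zero_obj_def by blast

definition "za X = (SOME a. a \<in> hom C X Z0)"
definition "zb Y = (SOME b. b \<in> hom C Z0 Y)"
lemma za: "X \<in> Ob C \<Longrightarrow> za X \<in> hom C X Z0"
  unfolding za_def using zo_to_ex[OF Z0] by (metis someI_ex)
lemma zb: "Y \<in> Ob C \<Longrightarrow> zb Y \<in> hom C Z0 Y"
  unfolding zb_def using zo_from_ex[OF Z0] by (metis someI_ex)

lemma is_zero_canon: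
  assumes "is_zero C h" "h \<in> hom C X Y"
  shows "h = cp C (zb Y) (za X)"
proof -
  obtain Z a b where Z: "zero_obj C Z" and a: "a \<in> hom C X Z" and b: "b \<in> hom C Z Y"
    and h: "h = cp C b a"
    using assms unfolding is_zero_def hom_iff by auto
  have ZO: "Z \<in> Ob C" using Z unfolding zero_obj_def by auto
  have XO: "X \<in> Ob C" and YO: "Y \<in> Ob C" using assms(2) by (auto simp: hom_iff)
  obtain u where u: "u \<in> hom C Z0 Z" using zo_from_ex[OF Z0 ZO] by blast
  have "cp C u (za X) = a" using zo_to[OF Z XO] cp_hom[OF za[OF XO] u] a by blast
  moreover have "cp C b u = zb Y" using zo_from[OF Z0 YO] cp_hom[OF u b] zb[OF YO] by blast
  ultimately show ?thesis using h u a b za[OF XO] zb[OF YO] assoc[of "za X" u b]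
    by (simp add: hom_iff)
qed

lemma canon_zero: "X \<in> Ob C \<Longrightarrow> Y \<in> Ob C \<Longrightarrow> is_zero C (cp C (zb Y) (za X)) \<and> cp C (zb Y) (za X) \<in> hom C X Y"
proof -
  assume XY: "X \<in> Ob C" "Y \<in> Ob C"
  have h: "cp C (zb Y) (za X) \<in> hom C X Y" using cp_hom[OF za[OF XY(1)] zb[OF XY(2)]] .
  then have "dom C (cp C (zb Y) (za X)) = X" "cod C (cp C (zb Y) (za X)) = Y" by (auto simp: hom_iff)
  then have "is_zero C (cp C (zb Y) (za X))" unfolding is_zero_def using Z0 za[OF XY(1)] zb[OF XY(2)] by metis
  with h show ?thesis by simp
qed

lemma zero_eq: "X \<in> Ob C \<Longrightarrow> Y \<in> Ob C \<Longrightarrow> zero C X Y = cp C (zb Y) (za X)"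
  unfolding zero_def
  apply (rule the_equality)
  using canon_zero is_zero_canon by auto

lemma zero_hom: "X \<in> Ob C \<Longrightarrow> Y \<in> Ob C \<Longrightarrow> zero C X Y \<in> hom C X Y \<and> is_zero C (zero C X Y)"
  using canon_zero zero_eq by auto

lemma zero_unique: "h \<in> hom C X Y \<Longrightarrow> is_zero C h \<Longrightarrow> h = zero C X Y"
  using is_zero_canon zero_eq by (auto simp: hom_iff)

lemma ar_zero[simp]: "X \<in> Ob C \<Longrightarrow> Y \<in> Ob C \<Longrightarrow> zero C X Y \<in> Ar C"
  using zero_hom by (simp add: hom_iff)
lemma dom_zero[simp]: "X \<in> Ob C \<Longrightarrow> Y \<in> Ob C \<Longrightarrow> dom C (zero C X Y) = X"
  using zero_hom by (simp add: hom_iff)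
lemma cod_zero[simp]: "X \<in> Ob C \<Longrightarrow> Y \<in> Ob C \<Longrightarrow> cod C (zero C X Y) = Y"
  using zero_hom by (simp add: hom_iff)

lemma is_zero_cp_l: "is_zero C h \<Longrightarrow> h \<in> Ar C \<Longrightarrow> g \<in> Ar C \<Longrightarrow> dom C g = cod C h \<Longrightarrow> is_zero C (cp C g h)"
proof -
  assume a: "is_zero C h" "h \<in> Ar C" "g \<in> Ar C" "dom C g = cod C h"
  then obtain Z x y where Z: "zero_obj C Z" "x \<in> hom C (dom C h) Z" "y \<in> hom C Z (cod C h)" "h = cp C y x"
    unfolding is_zero_def by blast
  have g: "g \<in> hom C (cod C h) (cod C g)" using a by (simp add: hom_iff)
  have 1: "cp C g y \<in> hom C Z (cod C (cp C g h))" using cp_hom[OF Z(3) g] a by simp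
  have 2: "cp C g h = cp C (cp C g y) x" unfolding Z(4)
    apply (rule assoc[symmetric]) using Z(2,3) a by (auto simp: hom_iff)
  have 3: "x \<in> hom C (dom C (cp C g h)) Z" using a Z(2) by simp
  show ?thesis unfolding is_zero_def using Z(1) 1 2 3 by blast
qed

lemma is_zero_cp_r: "is_zero C h \<Longrightarrow> h \<in> Ar C \<Longrightarrow> g \<in> Ar C \<Longrightarrow> dom C h = cod C g \<Longrightarrow> is_zero C (cp C h g)"
proof -
  assume a: "is_zero C h" "h \<in> Ar C" "g \<in> Ar C" "dom C h = cod C g"
  then obtain Z x y where Z: "zero_obj C Z" "x \<in> hom C (dom C h) Z" "y \<in> hom C Z (cod C h)" "h = cp C y x"
    unfolding is_zero_def by blast
  have g: "g \<in> hom C (dom C g) (dom C h)" using a by (simp add: hom_iff)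
  have 1: "cp C x g \<in> hom C (dom C (cp C h g)) Z" using cp_hom[OF g Z(2)] a by simp
  have 2: "cp C h g = cp C y (cp C x g)" unfolding Z(4)
    apply (rule assoc) using Z(2,3) a by (auto simp: hom_iff)
  have 3: "y \<in> hom C Z (cod C (cp C h g))" using a Z(3) by simp
  show ?thesis unfolding is_zero_def using Z(1) 1 2 3 by blast
qed

lemma is_zero_st: "is_zero C h \<Longrightarrow> h \<in> Ar C \<Longrightarrow> is_zero C (str C h)"
proof -
  assume a: "is_zero C h" "h \<in> Ar C"
  then obtain Z x y where Z: "zero_obj C Z" "x \<in> hom C (dom C h) Z" "y \<in> hom C Z (cod C h)" "h = cp C y x"
    unfolding is_zero_def by blast
  have 1: "str C y \<in> hom C (dom C (str C h)) Z" using st_hom[OF Z(3)] a by simp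
  have 2: "str C h = cp C (str C x) (str C y)" unfolding Z(4)
    apply (rule st_cp) using Z(2,3) by (auto simp: hom_iff)
  have 3: "str C x \<in> hom C Z (cod C (str C h))" using st_hom[OF Z(2)] a by simp
  show ?thesis unfolding is_zero_def using Z(1) 1 2 3 by blast
qed

lemma cp_zero_r[simp]: "g \<in> Ar C \<Longrightarrow> dom C g = Y \<Longrightarrow> X \<in> Ob C \<Longrightarrow> cp C g (zero C X Y) = zero C X (cod C g)"
  apply (rule zero_unique)
  using zero_hom[of X Y] is_zero_cp_l[of "zero C X Y" g] by (auto simp: hom_iff)

lemma cp_zero_l[simp]: "g \<in> Ar C \<Longrightarrow> cod C g = X \<Longrightarrow> Y \<in> Ob C \<Longrightarrow> cp C (zero C X Y) g = zero C (dom C g) Y"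
  apply (rule zero_unique)
  using zero_hom[of X Y] is_zero_cp_r[of "zero C X Y" g] by (auto simp: hom_iff)

lemma st_zero[simp]: "X \<in> Ob C \<Longrightarrow> Y \<in> Ob C \<Longrightarrow> str C (zero C X Y) = zero C Y X"
  apply (rule zero_unique)
  using zero_hom[of X Y] is_zero_st[of "zero C X Y"] by (auto simp: hom_iff)

lemma bp_basic:
  assumes "is_biproduct C A B P s1 r1 s2 r2"
  shows "P \<in> Ob C" "s1 \<in> hom C A P" "s2 \<in> hom C B P" "r1 \<in> hom C P A" "r2 \<in> hom C P B"
    "cp C r1 s1 = idt C A" "cp C r2 s2 = idt C B" "cp C r2 s1 = zero C A B" "cp C r1 s2 = zero C B A"
    "A \<in> Ob C" "B \<in> Ob C"
proof -
  show 1: "P \<in> Ob C" "s1 \<in> hom C A P" "s2 \<in> hom C B P" "r1 \<in> hom C P A" "r2 \<in> hom C P B"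
    "cp C r1 s1 = idt C A" "cp C r2 s2 = idt C B"
    using assms unfolding is_biproduct_def is_product_def is_coproduct_def by auto
  show 2: "A \<in> Ob C" "B \<in> Ob C" using 1 by (auto simp: hom_iff)
  have "is_zero C (cp C r2 s1)" "is_zero C (cp C r1 s2)" using assms unfolding is_biproduct_def by auto
  moreover have "cp C r2 s1 \<in> hom C A B" "cp C r1 s2 \<in> hom C B A" using 1 cp_hom by auto
  ultimately show "cp C r2 s1 = zero C A B" "cp C r1 s2 = zero C B A" using zero_unique by auto
qed

lemma ex1_unique: "\<exists>!x. P x \<Longrightarrow> P a \<Longrightarrow> P b \<Longrightarrow> a = b" by blast

lemma assoc_h: "f \<in> hom C X Y \<Longrightarrow> g \<in> hom C Y Z \<Longrightarrow> h \<in> hom C Z W \<Longrightarrow>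
   cp C h (cp C g f) = cp C (cp C h g) f"
  by (simp add: hom_iff)

lemma bp_prodU:
  assumes "is_biproduct C A B P s1 r1 s2 r2" "x1 \<in> hom C Z A" "x2 \<in> hom C Z B"
  shows "\<exists>!h. h \<in> hom C Z P \<and> cp C r1 h = x1 \<and> cp C r2 h = x2"
proof -
  have "is_product C A B P r1 r2" using assms(1) unfolding is_biproduct_def by simp
  then have U: "\<And>Z g1 g2. g1 \<in> hom C Z A \<Longrightarrow> g2 \<in> hom C Z B \<Longrightarrow>
        (\<exists>!h. h \<in> hom C Z P \<and> cp C r1 h = g1 \<and> cp C r2 h = g2)"
    unfolding is_product_def by simp
  show ?thesis using U[OF assms(2,3)] .
qed

lemma bp_coprodU:
  assumes "is_biproduct C A B P s1 r1 s2 r2" "x1 \<in> hom C A Z" "x2 \<in> hom C B Z"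
  shows "\<exists>!h. h \<in> hom C P Z \<and> cp C h s1 = x1 \<and> cp C h s2 = x2"
proof -
  have "is_coproduct C A B P s1 s2" using assms(1) unfolding is_biproduct_def by simp
  then have U: "\<And>Z g1 g2. g1 \<in> hom C A Z \<Longrightarrow> g2 \<in> hom C B Z \<Longrightarrow>
        (\<exists>!h. h \<in> hom C P Z \<and> cp C h s1 = g1 \<and> cp C h s2 = g2)"
    unfolding is_coproduct_def by simp
  show ?thesis using U[OF assms(2,3)] .
qed

lemma bp_pair:
  assumes "is_biproduct C A B P s1 r1 s2 r2" "x1 \<in> hom C Z A" "x2 \<in> hom C Z B"
  shows "\<exists>h. h \<in> hom C Z P \<and> cp C r1 h = x1 \<and> cp C r2 h = x2"
  using bp_prodU[OF assms] by (rule ex1_implies_ex)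

lemma bp_ext_l:
  assumes "is_biproduct C A B P s1 r1 s2 r2" "x \<in> hom C Z P" "y \<in> hom C Z P"
    "cp C r1 x = cp C r1 y" "cp C r2 x = cp C r2 y"
  shows "x = y"
proof -
  have "cp C r1 x \<in> hom C Z A" "cp C r2 x \<in> hom C Z B"
    using cp_hom[OF assms(2) bp_basic(4)[OF assms(1)]] cp_hom[OF assms(2) bp_basic(5)[OF assms(1)]] by auto
  note E = bp_prodU[OF assms(1) this]
  have X: "x \<in> hom C Z P \<and> cp C r1 x = cp C r1 x \<and> cp C r2 x = cp C r2 x" using assms(2) by (intro conjI refl)
  have Y: "y \<in> hom C Z P \<and> cp C r1 y = cp C r1 x \<and> cp C r2 y = cp C r2 x"
    using assms(3) assms(4)[symmetric] assms(5)[symmetric] by (intro conjI)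
  show ?thesis using ex1_unique[OF E X Y] .
qed

lemma bp_copair:
  assumes "is_biproduct C A B P s1 r1 s2 r2" "x1 \<in> hom C A Z" "x2 \<in> hom C B Z"
  shows "\<exists>h. h \<in> hom C P Z \<and> cp C h s1 = x1 \<and> cp C h s2 = x2"
  using bp_coprodU[OF assms] by (rule ex1_implies_ex)

lemma bp_ext_r:
  assumes "is_biproduct C A B P s1 r1 s2 r2" "x \<in> hom C P Z" "y \<in> hom C P Z"
    "cp C x s1 = cp C y s1" "cp C x s2 = cp C y s2"
  shows "x = y"
proof -
  have "cp C x s1 \<in> hom C A Z" "cp C x s2 \<in> hom C B Z"
    using cp_hom[OF bp_basic(2)[OF assms(1)] assms(2)] cp_hom[OF bp_basic(3)[OF assms(1)] assms(2)] by auto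
  note E = bp_coprodU[OF assms(1) this]
  have X: "x \<in> hom C P Z \<and> cp C x s1 = cp C x s1 \<and> cp C x s2 = cp C x s2" using assms(2) by (intro conjI refl)
  have Y: "y \<in> hom C P Z \<and> cp C y s1 = cp C x s1 \<and> cp C y s2 = cp C x s2"
    using assms(3) assms(4)[symmetric] assms(5)[symmetric] by (intro conjI)
  show ?thesis using ex1_unique[OF E X Y] .
qed

lemma prod_swap: "is_product C A B P r1 r2 \<Longrightarrow> is_product C B A P r2 r1"
  unfolding is_product_def by (simp add: conj_commute)
lemma coprod_swap: "is_coproduct C A B P r1 r2 \<Longrightarrow> is_coproduct C B A P r2 r1"
  unfolding is_coproduct_def by (simp add: conj_commute)

lemma bp_swap:
  assumes "is_biproduct C A B P s1 r1 s2 r2"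
  shows "is_biproduct C B A P s2 r2 s1 r1"
  using assms prod_swap coprod_swap unfolding is_biproduct_def by blast

section \<open>Chosen orthonormal biproducts\<close>

definition "obp A B = (SOME (P,s1,s2). ortho_biproduct C A B P s1 (str C s1) s2 (str C s2))"
definition "PP A B = fst (obp A B)"
definition "i1 A B = fst (snd (obp A B))"
definition "i2 A B = snd (snd (obp A B))"

lemma obp: assumes "A \<in> Ob C" "B \<in> Ob C"
  shows "ortho_biproduct C A B (PP A B) (i1 A B) (str C (i1 A B)) (i2 A B) (str C (i2 A B))"
proof -
  obtain P s1 s2 where "ortho_biproduct C A B P s1 (str C s1) s2 (str C s2)"
    using PH assms unfolding pre_hilbert_def by blast
  then have "(\<lambda>(P,s1,s2). ortho_biproduct C A B P s1 (str C s1) s2 (str C s2)) (P,s1,s2)" by simp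
  then have "(\<lambda>(P,s1,s2). ortho_biproduct C A B P s1 (str C s1) s2 (str C s2)) (obp A B)"
    unfolding obp_def by (rule someI)
  then show ?thesis unfolding PP_def i1_def i2_def by (simp add: case_prod_beta)
qed

lemma obp_bp: "A \<in> Ob C \<Longrightarrow> B \<in> Ob C \<Longrightarrow>
   is_biproduct C A B (PP A B) (i1 A B) (str C (i1 A B)) (i2 A B) (str C (i2 A B))"
  using obp unfolding ortho_biproduct_def by blast

section \<open>Addition\<close>

definition "pr f g = (THE h. h \<in> hom C (dom C f) (PP (cod C f) (cod C f)) \<and>
   cp C (str C (i1 (cod C f) (cod C f))) h = f \<and> cp C (str C (i2 (cod C f) (cod C f))) h = g)"
definition "nab Y = (THE q. q \<in> hom C (PP Y Y) Y \<and> cp C q (i1 Y Y) = idt C Y \<and> cp C q (i2 Y Y) = idt C Y)"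
definition "ad f g = cp C (nab (cod C f)) (pr f g)"

lemma pr: assumes "f \<in> hom C X Y" "g \<in> hom C X Y"
  shows "pr f g \<in> hom C X (PP Y Y) \<and> cp C (str C (i1 Y Y)) (pr f g) = f \<and> cp C (str C (i2 Y Y)) (pr f g) = g"
proof -
  have Y: "Y \<in> Ob C" and df: "dom C f = X" "cod C f = Y" using assms by (auto simp: hom_iff)
  have B: "is_biproduct C Y Y (PP Y Y) (i1 Y Y) (str C (i1 Y Y)) (i2 Y Y) (str C (i2 Y Y))"
    using obp_bp[OF Y Y] .
  have "\<exists>!h. h \<in> hom C X (PP Y Y) \<and> cp C (str C (i1 Y Y)) h = f \<and> cp C (str C (i2 Y Y)) h = g"
    using bp_pair[OF B assms] bp_ext_l[OF B] by metis
  then show ?thesis unfolding pr_def df by (rule theI')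
qed

lemma nab: assumes "Y \<in> Ob C"
  shows "nab Y \<in> hom C (PP Y Y) Y \<and> cp C (nab Y) (i1 Y Y) = idt C Y \<and> cp C (nab Y) (i2 Y Y) = idt C Y"
proof -
  have B: "is_biproduct C Y Y (PP Y Y) (i1 Y Y) (str C (i1 Y Y)) (i2 Y Y) (str C (i2 Y Y))"
    using obp_bp[OF assms assms] .
  have "\<exists>!h. h \<in> hom C (PP Y Y) Y \<and> cp C h (i1 Y Y) = idt C Y \<and> cp C h (i2 Y Y) = idt C Y"
    using bp_copair[OF B id_hom[OF assms] id_hom[OF assms]] bp_ext_r[OF B] by metis
  then show ?thesis unfolding nab_def by (rule theI')
qed

lemma ad_hom: assumes "f \<in> hom C X Y" "g \<in> hom C X Y" shows "ad f g \<in> hom C X Y"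
proof -
  have "cod C f = Y" "Y \<in> Ob C" using assms by (auto simp: hom_iff)
  then show ?thesis unfolding ad_def using pr[OF assms] nab cp_hom by metis
qed

lemma sum_any:
  assumes B: "is_biproduct C Y Y P s1 r1 s2 r2" and fg: "f \<in> hom C X Y" "g \<in> hom C X Y"
    and p: "p \<in> hom C X P" "cp C r1 p = f" "cp C r2 p = g"
    and q: "q \<in> hom C P Y" "cp C q s1 = idt C Y" "cp C q s2 = idt C Y"
  shows "cp C q p = ad f g"
proof -
  note b = bp_basic[OF B]
  have Y: "Y \<in> Ob C" using b by simp
  define Q where "Q = PP Y Y"
  define t1 where "t1 = i1 Y Y"
  define t2 where "t2 = i2 Y Y"
  have B2: "is_biproduct C Y Y Q t1 (str C t1) t2 (str C t2)"
    unfolding Q_def t1_def t2_def using obp_bp[OF Y Y] .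
  note b2 = bp_basic[OF B2]
  obtain phi where phi: "phi \<in> hom C P Q" "cp C (str C t1) phi = r1" "cp C (str C t2) phi = r2"
    using bp_pair[OF B2 b(4) b(5)] by blast
  have ps1: "cp C phi s1 = t1"
    apply (rule bp_ext_l[OF B2 cp_hom[OF b(2) phi(1)] b2(2)])
    using assoc_h[OF b(2) phi(1) b2(4)] assoc_h[OF b(2) phi(1) b2(5)] phi b b2 by auto
  have ps2: "cp C phi s2 = t2"
    apply (rule bp_ext_l[OF B2 cp_hom[OF b(3) phi(1)] b2(3)])
    using assoc_h[OF b(3) phi(1) b2(4)] assoc_h[OF b(3) phi(1) b2(5)] phi b b2 by auto
  have N: "nab Y \<in> hom C Q Y" "cp C (nab Y) t1 = idt C Y" "cp C (nab Y) t2 = idt C Y"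
    using nab[OF Y] unfolding Q_def t1_def t2_def by auto
  have nq: "cp C (nab Y) phi = q"
    apply (rule bp_ext_r[OF B cp_hom[OF phi(1) N(1)] q(1)])
    using assoc_h[OF b(2) phi(1) N(1)] assoc_h[OF b(3) phi(1) N(1)] N q ps1 ps2 by auto
  have PR: "pr f g \<in> hom C X Q" "cp C (str C t1) (pr f g) = f" "cp C (str C t2) (pr f g) = g"
    using pr[OF fg] unfolding Q_def t1_def t2_def by auto
  have pp: "cp C phi p = pr f g"
    apply (rule bp_ext_l[OF B2 cp_hom[OF p(1) phi(1)] PR(1)])
    using assoc_h[OF p(1) phi(1) b2(4)] assoc_h[OF p(1) phi(1) b2(5)] phi p PR by auto
  have "cod C f = Y" using fg by (simp add: hom_iff)
  then have "ad f g = cp C (nab Y) (cp C phi p)" unfolding ad_def pp by simp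
  also have "\<dots> = cp C q p" using nq assoc_h[OF p(1) phi(1) N(1)] by simp
  finally show ?thesis by simp
qed

lemma is_sum_iff: "is_sum C f g h \<longleftrightarrow> (\<exists>X Y. f \<in> hom C X Y \<and> g \<in> hom C X Y) \<and> h = ad f g"
proof
  assume "is_sum C f g h"
  then obtain X Y P s1 r1 s2 r2 p q where
     H: "f \<in> hom C X Y" "g \<in> hom C X Y" "is_biproduct C Y Y P s1 r1 s2 r2"
     "p \<in> hom C X P" "cp C r1 p = f" "cp C r2 p = g"
     "q \<in> hom C P Y" "cp C q s1 = idt C Y" "cp C q s2 = idt C Y" "h = cp C q p"
    unfolding is_sum_def by blast
  then show "(\<exists>X Y. f \<in> hom C X Y \<and> g \<in> hom C X Y) \<and> h = ad f g"
    using sum_any[OF H(3,1,2,4,5,6,7,8,9)] by blast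
next
  assume "(\<exists>X Y. f \<in> hom C X Y \<and> g \<in> hom C X Y) \<and> h = ad f g"
  then obtain X Y where H: "f \<in> hom C X Y" "g \<in> hom C X Y" "h = ad f g" by blast
  have Y: "Y \<in> Ob C" "cod C f = Y" using H by (auto simp: hom_iff)
  show "is_sum C f g h" unfolding is_sum_def
    using H pr[OF H(1,2)] nab[OF Y(1)] obp_bp[OF Y(1) Y(1)] unfolding ad_def Y(2) by blast
qed

declare assoc[simp del]

lemma cb:
  assumes "A \<in> Ob C" "B \<in> Ob C"
  shows "is_biproduct C A B (PP A B) (i1 A B) (str C (i1 A B)) (i2 A B) (str C (i2 A B))"
    "PP A B \<in> Ob C" "i1 A B \<in> hom C A (PP A B)" "i2 A B \<in> hom C B (PP A B)"
    "str C (i1 A B) \<in> hom C (PP A B) A" "str C (i2 A B) \<in> hom C (PP A B) B"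
    "cp C (str C (i1 A B)) (i1 A B) = idt C A" "cp C (str C (i2 A B)) (i2 A B) = idt C B"
    "cp C (str C (i2 A B)) (i1 A B) = zero C A B" "cp C (str C (i1 A B)) (i2 A B) = zero C B A"
  using obp_bp[OF assms] bp_basic[OF obp_bp[OF assms]] by auto

lemma ad_zero_r: assumes f: "f \<in> hom C X Y" shows "ad f (zero C X Y) = f"
proof -
  have X: "X \<in> Ob C" and Y: "Y \<in> Ob C" using f by (auto simp: hom_iff)
  note c = cb[OF Y Y]
  have p: "cp C (i1 Y Y) f \<in> hom C X (PP Y Y)" using cp_hom[OF f c(3)] .
  have 1: "cp C (str C (i1 Y Y)) (cp C (i1 Y Y) f) = f"
    using assoc_h[OF f c(3) c(5)] c(7) f by (simp add: hom_iff)
  have 2: "cp C (str C (i2 Y Y)) (cp C (i1 Y Y) f) = zero C X Y"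
    using assoc_h[OF f c(3) c(6)] c(9) f X Y by (simp add: hom_iff)
  have "cp C (nab Y) (cp C (i1 Y Y) f) = ad f (zero C X Y)"
    using sum_any[OF c(1) f zero_hom[OF X Y, THEN conjunct1] p 1 2] nab[OF Y] by blast
  moreover have "cp C (nab Y) (cp C (i1 Y Y) f) = f"
    using assoc_h[OF f c(3), of "nab Y" Y] nab[OF Y] f by (simp add: hom_iff)
  ultimately show ?thesis by simp
qed

lemma ad_zero_l: assumes f: "f \<in> hom C X Y" shows "ad (zero C X Y) f = f"
proof -
  have X: "X \<in> Ob C" and Y: "Y \<in> Ob C" using f by (auto simp: hom_iff)
  note c = cb[OF Y Y]
  have p: "cp C (i2 Y Y) f \<in> hom C X (PP Y Y)" using cp_hom[OF f c(4)] .
  have 1: "cp C (str C (i2 Y Y)) (cp C (i2 Y Y) f) = f"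
    using assoc_h[OF f c(4) c(6)] c(8) f by (simp add: hom_iff)
  have 2: "cp C (str C (i1 Y Y)) (cp C (i2 Y Y) f) = zero C X Y"
    using assoc_h[OF f c(4) c(5)] c(10) f X Y by (simp add: hom_iff)
  have "cp C (nab Y) (cp C (i2 Y Y) f) = ad (zero C X Y) f"
    using sum_any[OF c(1) zero_hom[OF X Y, THEN conjunct1] f p 2 1] nab[OF Y] by blast
  moreover have "cp C (nab Y) (cp C (i2 Y Y) f) = f"
    using assoc_h[OF f c(4), of "nab Y" Y] nab[OF Y] f by (simp add: hom_iff)
  ultimately show ?thesis by simp
qed

lemma ad_comm: assumes f: "f \<in> hom C X Y" and g: "g \<in> hom C X Y" shows "ad f g = ad g f"
proof -
  have Y: "Y \<in> Ob C" "cod C g = Y" using f g by (auto simp: hom_iff)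
  note c = cb[OF Y(1) Y(1)]
  note B = bp_swap[OF c(1)]
  have "cp C (nab Y) (pr g f) = ad f g"
    using sum_any[OF B f g] pr[OF g f] nab[OF Y(1)] by blast
  then show ?thesis unfolding ad_def Y(2) by simp
qed

lemma ad_cp_r: assumes f: "f \<in> hom C X Y" and g: "g \<in> hom C X Y" and k: "k \<in> hom C W X"
  shows "cp C (ad f g) k = ad (cp C f k) (cp C g k)"
proof -
  have Y: "Y \<in> Ob C" "cod C f = Y" using f g by (auto simp: hom_iff)
  note c = cb[OF Y(1) Y(1)]
  note P = pr[OF f g]
  have 1: "cp C (str C (i1 Y Y)) (cp C (pr f g) k) = cp C f k" using assoc_h[OF k _ c(5), of "pr f g"] P by simp
  have 2: "cp C (str C (i2 Y Y)) (cp C (pr f g) k) = cp C g k" using assoc_h[OF k _ c(6), of "pr f g"] P by simp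
  have "cp C (nab Y) (cp C (pr f g) k) = ad (cp C f k) (cp C g k)"
    using sum_any[OF c(1) cp_hom[OF k f] cp_hom[OF k g] cp_hom[OF k P[THEN conjunct1]] 1 2] nab[OF Y(1)] by blast
  moreover have "cp C (ad f g) k = cp C (nab Y) (cp C (pr f g) k)"
    unfolding ad_def Y(2) using assoc_h[OF k _ , of "pr f g" "PP Y Y" "nab Y" Y] P nab[OF Y(1)] by simp
  ultimately show ?thesis by simp
qed

lemma ad_CD:
  assumes B: "is_biproduct C X X P s1 r1 s2 r2" and f: "f \<in> hom C X Y" and g: "g \<in> hom C X Y"
    and c: "c \<in> hom C P Y" "cp C c s1 = f" "cp C c s2 = g"
    and d: "d \<in> hom C X P" "cp C r1 d = idt C X" "cp C r2 d = idt C X"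
  shows "cp C c d = ad f g"
proof -
  note b = bp_basic[OF B]
  have X: "X \<in> Ob C" and Y: "Y \<in> Ob C" "cod C f = Y" using f by (auto simp: hom_iff)
  define Q where "Q = PP Y Y"
  define t1 where "t1 = i1 Y Y"
  define t2 where "t2 = i2 Y Y"
  have B2: "is_biproduct C Y Y Q t1 (str C t1) t2 (str C t2)"
    unfolding Q_def t1_def t2_def using obp_bp[OF Y(1) Y(1)] .
  note b2 = bp_basic[OF B2]
  obtain M where M: "M \<in> hom C P Q" "cp C (str C t1) M = cp C f r1" "cp C (str C t2) M = cp C g r2"
    using bp_pair[OF B2 cp_hom[OF b(4) f] cp_hom[OF b(5) g]] by blast
  have PR: "pr f g \<in> hom C X Q" "cp C (str C t1) (pr f g) = f" "cp C (str C t2) (pr f g) = g"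
    using pr[OF f g] unfolding Q_def t1_def t2_def by auto
  have Md: "cp C M d = pr f g"
    apply (rule bp_ext_l[OF B2 cp_hom[OF d(1) M(1)] PR(1)])
    using assoc_h[OF d(1) M(1) b2(4)] assoc_h[OF d(1) M(1) b2(5)] M PR
      assoc_h[OF d(1) b(4) f, symmetric] assoc_h[OF d(1) b(5) g, symmetric] d f g by (simp_all add: hom_iff)
  have N: "nab Y \<in> hom C Q Y" "cp C (nab Y) t1 = idt C Y" "cp C (nab Y) t2 = idt C Y"
    using nab[OF Y(1)] unfolding Q_def t1_def t2_def by auto
  have Ms1: "cp C M s1 = cp C t1 f"
    apply (rule bp_ext_l[OF B2 cp_hom[OF b(2) M(1)] cp_hom[OF f b2(2)]])
    using assoc_h[OF b(2) M(1) b2(4)] assoc_h[OF b(2) M(1) b2(5)] M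
      assoc_h[OF b(2) b(4) f, symmetric] assoc_h[OF b(2) b(5) g, symmetric]
      assoc_h[OF f b2(2) b2(4)] assoc_h[OF f b2(2) b2(5)] b b2 f g X Y by (simp_all add: hom_iff)
  have Ms2: "cp C M s2 = cp C t2 g"
    apply (rule bp_ext_l[OF B2 cp_hom[OF b(3) M(1)] cp_hom[OF g b2(3)]])
    using assoc_h[OF b(3) M(1) b2(4)] assoc_h[OF b(3) M(1) b2(5)] M
      assoc_h[OF b(3) b(4) f, symmetric] assoc_h[OF b(3) b(5) g, symmetric]
      assoc_h[OF g b2(3) b2(4)] assoc_h[OF g b2(3) b2(5)] b b2 f g X Y by (simp_all add: hom_iff)
  have NM: "cp C (nab Y) M = c"
    apply (rule bp_ext_r[OF B cp_hom[OF M(1) N(1)] c(1)])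
    using assoc_h[OF b(2) M(1) N(1), symmetric] assoc_h[OF b(3) M(1) N(1), symmetric] Ms1 Ms2
      assoc_h[OF f b2(2) N(1)] assoc_h[OF g b2(3) N(1)] N c f g by (simp_all add: hom_iff)
  have "ad f g = cp C (nab Y) (cp C M d)" unfolding ad_def Md Y(2) ..
  also have "\<dots> = cp C c d" using assoc_h[OF d(1) M(1) N(1)] NM by simp
  finally show ?thesis by simp
qed

lemma ad_cp_l: assumes f: "f \<in> hom C X Y" and g: "g \<in> hom C X Y" and h: "h \<in> hom C Y Z"
  shows "cp C h (ad f g) = ad (cp C h f) (cp C h g)"
proof -
  have X: "X \<in> Ob C" using f by (auto simp: hom_iff)
  note c = cb[OF X X]
  obtain k where k: "k \<in> hom C (PP X X) Y" "cp C k (i1 X X) = f" "cp C k (i2 X X) = g"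
    using bp_copair[OF c(1) f g] by blast
  obtain d where d: "d \<in> hom C X (PP X X)" "cp C (str C (i1 X X)) d = idt C X" "cp C (str C (i2 X X)) d = idt C X"
    using bp_pair[OF c(1) id_hom[OF X] id_hom[OF X]] by blast
  have 1: "ad f g = cp C k d" using ad_CD[OF c(1) f g k d] by simp
  have 2: "ad (cp C h f) (cp C h g) = cp C (cp C h k) d"
    apply (rule ad_CD[OF c(1) cp_hom[OF f h] cp_hom[OF g h] cp_hom[OF k(1) h] _ _ d, symmetric])
    using assoc_h[OF c(3) k(1) h] assoc_h[OF c(4) k(1) h] k by simp_all
  show ?thesis unfolding 1 2 using assoc_h[OF d(1) k(1) h] .
qed

lemma ad_st: assumes f: "f \<in> hom C X Y" and g: "g \<in> hom C X Y"
  shows "str C (ad f g) = ad (str C f) (str C g)"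
proof -
  have Y: "Y \<in> Ob C" "cod C f = Y" using f by (auto simp: hom_iff)
  note c = cb[OF Y(1) Y(1)]
  note P = pr[OF f g]
  note N = nab[OF Y(1)]
  have s: "str C (ad f g) = cp C (str C (pr f g)) (str C (nab Y))"
    unfolding ad_def Y(2) using P N by (simp add: hom_iff)
  have 1: "cp C (str C (pr f g)) (i1 Y Y) = str C f"
    using st_cp[of "pr f g" "str C (i1 Y Y)"] P c by (simp add: hom_iff)
  have 2: "cp C (str C (pr f g)) (i2 Y Y) = str C g"
    using st_cp[of "pr f g" "str C (i2 Y Y)"] P c by (simp add: hom_iff)
  have 3: "cp C (str C (i1 Y Y)) (str C (nab Y)) = idt C Y"
    using st_cp[of "i1 Y Y" "nab Y"] N c Y by (simp add: hom_iff)
  have 4: "cp C (str C (i2 Y Y)) (str C (nab Y)) = idt C Y"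
    using st_cp[of "i2 Y Y" "nab Y"] N c Y by (simp add: hom_iff)
  show ?thesis unfolding s
    by (rule ad_CD[OF c(1) st_hom[OF f] st_hom[OF g] st_hom[OF P[THEN conjunct1]] 1 2 st_hom[OF N[THEN conjunct1]] 3 4])
qed

lemma interchange:
  assumes a: "a \<in> hom C X Y" and b: "b \<in> hom C X Y" and c: "c \<in> hom C X Y" and d: "d \<in> hom C X Y"
  shows "ad (ad a b) (ad c d) = ad (ad a c) (ad b d)"
proof -
  have X: "X \<in> Ob C" and Y: "Y \<in> Ob C" using a by (auto simp: hom_iff)
  note x = cb[OF X X]
  note y = cb[OF Y Y]
  obtain kab where kab: "kab \<in> hom C (PP X X) Y" "cp C kab (i1 X X) = a" "cp C kab (i2 X X) = b"
    using bp_copair[OF x(1) a b] by blast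
  obtain kcd where kcd: "kcd \<in> hom C (PP X X) Y" "cp C kcd (i1 X X) = c" "cp C kcd (i2 X X) = d"
    using bp_copair[OF x(1) c d] by blast
  obtain dg where dg: "dg \<in> hom C X (PP X X)" "cp C (str C (i1 X X)) dg = idt C X" "cp C (str C (i2 X X)) dg = idt C X"
    using bp_pair[OF x(1) id_hom[OF X] id_hom[OF X]] by blast
  obtain M where M: "M \<in> hom C (PP X X) (PP Y Y)" "cp C (str C (i1 Y Y)) M = kab" "cp C (str C (i2 Y Y)) M = kcd"
    using bp_pair[OF y(1) kab(1) kcd(1)] by blast
  note N = nab[OF Y]
  have e1: "cp C (str C (i1 Y Y)) (cp C M dg) = ad a b"
    using assoc_h[OF dg(1) M(1) y(5)] M ad_CD[OF x(1) a b kab dg] by simp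
  have e2: "cp C (str C (i2 Y Y)) (cp C M dg) = ad c d"
    using assoc_h[OF dg(1) M(1) y(6)] M ad_CD[OF x(1) c d kcd dg] by simp
  have L: "cp C (nab Y) (cp C M dg) = ad (ad a b) (ad c d)"
    using sum_any[OF y(1) ad_hom[OF a b] ad_hom[OF c d] cp_hom[OF dg(1) M(1)] e1 e2] N by blast
  have f1: "cp C (str C (i1 Y Y)) (cp C M (i1 X X)) = a"
    using assoc_h[OF x(3) M(1) y(5)] M kab by simp
  have f2: "cp C (str C (i2 Y Y)) (cp C M (i1 X X)) = c"
    using assoc_h[OF x(3) M(1) y(6)] M kcd by simp
  have g1: "cp C (str C (i1 Y Y)) (cp C M (i2 X X)) = b"
    using assoc_h[OF x(4) M(1) y(5)] M kab by simp
  have g2: "cp C (str C (i2 Y Y)) (cp C M (i2 X X)) = d"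
    using assoc_h[OF x(4) M(1) y(6)] M kcd by simp
  have h1: "cp C (cp C (nab Y) M) (i1 X X) = ad a c"
    using sum_any[OF y(1) a c cp_hom[OF x(3) M(1)] f1 f2] N assoc_h[OF x(3) M(1), of "nab Y" Y] by simp
  have h2: "cp C (cp C (nab Y) M) (i2 X X) = ad b d"
    using sum_any[OF y(1) b d cp_hom[OF x(4) M(1)] g1 g2] N assoc_h[OF x(4) M(1), of "nab Y" Y] by simp
  have R: "cp C (cp C (nab Y) M) dg = ad (ad a c) (ad b d)"
    using ad_CD[OF x(1) ad_hom[OF a c] ad_hom[OF b d] cp_hom[OF M(1)] h1 h2 dg] N by blast
  show ?thesis using L R assoc_h[OF dg(1) M(1), of "nab Y" Y] N by simp
qed

lemma ad_assoc:
  assumes a: "a \<in> hom C X Y" and b: "b \<in> hom C X Y" and c: "c \<in> hom C X Y"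
  shows "ad (ad a b) c = ad a (ad b c)"
proof -
  have X: "X \<in> Ob C" and Y: "Y \<in> Ob C" using a by (auto simp: hom_iff)
  note z = zero_hom[OF X Y, THEN conjunct1]
  have "ad (ad a b) c = ad (ad a b) (ad (zero C X Y) c)" using ad_zero_l[OF c] by simp
  also have "\<dots> = ad (ad a (zero C X Y)) (ad b c)" by (rule interchange[OF a b z c])
  also have "\<dots> = ad a (ad b c)" using ad_zero_r[OF a] by simp
  finally show ?thesis .
qed

lemma bp_id:
  assumes B: "is_biproduct C A B P s1 r1 s2 r2"
  shows "ad (cp C s1 r1) (cp C s2 r2) = idt C P"
proof -
  note b = bp_basic[OF B]
  have h1: "cp C s1 r1 \<in> hom C P P" "cp C s2 r2 \<in> hom C P P" using cp_hom b by blast+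
  show ?thesis
  proof (rule bp_ext_r[OF B ad_hom[OF h1] id_hom[OF b(1)]])
    have "cp C (ad (cp C s1 r1) (cp C s2 r2)) s1 = ad (cp C (cp C s1 r1) s1) (cp C (cp C s2 r2) s1)"
      using ad_cp_r[OF h1 b(2)] .
    also have "\<dots> = ad s1 (zero C A P)"
      using assoc_h[OF b(2) b(4) b(2)] assoc_h[OF b(2) b(5) b(3)] b by (simp add: hom_iff)
    also have "\<dots> = s1" using ad_zero_r[OF b(2)] .
    finally show "cp C (ad (cp C s1 r1) (cp C s2 r2)) s1 = cp C (idt C P) s1"
      using b by (simp add: hom_iff)
  next
    have "cp C (ad (cp C s1 r1) (cp C s2 r2)) s2 = ad (cp C (cp C s1 r1) s2) (cp C (cp C s2 r2) s2)"
      using ad_cp_r[OF h1 b(3)] .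
    also have "\<dots> = ad (zero C B P) s2"
      using assoc_h[OF b(3) b(4) b(2)] assoc_h[OF b(3) b(5) b(3)] b by (simp add: hom_iff)
    also have "\<dots> = s2" using ad_zero_l[OF b(3)] .
    finally show "cp C (ad (cp C s1 r1) (cp C s2 r2)) s2 = cp C (idt C P) s2"
      using b by (simp add: hom_iff)
  qed
qed

lemma kerD:
  assumes "is_kernel C k f"
  shows "f \<in> Ar C" "k \<in> hom C (dom C k) (dom C f)" "cp C f k = zero C (dom C k) (cod C f)"
    "\<And>Z x. x \<in> hom C Z (dom C f) \<Longrightarrow> cp C f x = zero C Z (cod C f) \<Longrightarrow> \<exists>!h. h \<in> hom C Z (dom C k) \<and> cp C k h = x"
proof -
  show f: "f \<in> Ar C" and k: "k \<in> hom C (dom C k) (dom C f)" using assms unfolding is_kernel_def by auto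
  have "is_zero C (cp C f k)" using assms unfolding is_kernel_def by auto
  moreover have "cp C f k \<in> hom C (dom C k) (cod C f)" using cp_hom[OF k, of f "cod C f"] f by (simp add: hom_iff)
  ultimately show "cp C f k = zero C (dom C k) (cod C f)"
    using zero_unique by blast
  fix Z x assume x: "x \<in> hom C Z (dom C f)" and z: "cp C f x = zero C Z (cod C f)"
  have "Z \<in> Ob C" using x by (auto simp: hom_iff)
  then have "is_zero C (cp C f x)" unfolding z using zero_hom f by simp
  then show "\<exists>!h. h \<in> hom C Z (dom C k) \<and> cp C k h = x" using assms x unfolding is_kernel_def by blast
qed

lemma R3: "f \<in> Ar C \<Longrightarrow> \<exists>k. is_kernel C k f \<and> isometry C k"
  using PH unfolding pre_hilbert_def by blast

lemma R4: "X \<in> Ob C \<Longrightarrow> ortho_biproduct C X X P s1 r1 s2 r2 \<Longrightarrow> d \<in> hom C X P \<Longrightarrow>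
   cp C r1 d = idt C X \<Longrightarrow> cp C r2 d = idt C X \<Longrightarrow> \<exists>g. is_kernel C d g"
  using PH unfolding pre_hilbert_def by blast

lemma neg_ex: assumes X: "X \<in> Ob C" shows "\<exists>v. v \<in> hom C X X \<and> ad (idt C X) v = zero C X X"
proof -
  define P where "P = PP X X"
  define j1 where "j1 = i1 X X"
  define j2 where "j2 = i2 X X"
  define q where "q = nab X"
  have c: "is_biproduct C X X P j1 (str C j1) j2 (str C j2)" "P \<in> Ob C" "j1 \<in> hom C X P" "j2 \<in> hom C X P"
    "str C j1 \<in> hom C P X" "str C j2 \<in> hom C P X" "cp C (str C j1) j1 = idt C X" "cp C (str C j2) j2 = idt C X"
    "cp C (str C j2) j1 = zero C X X" "cp C (str C j1) j2 = zero C X X"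
    using cb[OF X X] unfolding P_def j1_def j2_def by auto
  have OB: "ortho_biproduct C X X P j1 (str C j1) j2 (str C j2)"
    using obp[OF X X] unfolding P_def j1_def j2_def .
  have q: "q \<in> hom C P X" "cp C q j1 = idt C X" "cp C q j2 = idt C X"
    using nab[OF X] unfolding P_def j1_def j2_def q_def by auto
  define D where "D = str C q"
  have D: "D \<in> hom C X P" "cp C (str C j1) D = idt C X" "cp C (str C j2) D = idt C X"
    unfolding D_def using st_hom[OF q(1)] st_cp[of j1 q] st_cp[of j2 q] q c X by (auto simp: hom_iff)
  obtain g where g: "is_kernel C D g" using R4[OF X OB D] by blast
  obtain n where n: "is_kernel C n q" "isometry C n" using R3 q(1) by (auto simp: hom_iff)
  note kn = kerD[OF n(1)]
  define N where "N = dom C n"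
  have nh: "n \<in> hom C N P" using kn(2) q(1) unfolding N_def by (simp add: hom_iff)
  have NO: "N \<in> Ob C" using nh by (auto simp: hom_iff)
  have nq: "cp C q n = zero C N X" using kn(3) q(1) unfolding N_def by (simp add: hom_iff)
  have nn: "cp C (str C n) n = idt C N" using n(2) unfolding isometry_def N_def by simp
  define n1 where "n1 = cp C (str C j1) n"
  define n2 where "n2 = cp C (str C j2) n"
  have n1: "n1 \<in> hom C N X" unfolding n1_def using cp_hom[OF nh c(5)] .
  have n2: "n2 \<in> hom C N X" unfolding n2_def using cp_hom[OF nh c(6)] .
  have sn1: "str C n1 = cp C (str C n) j1" unfolding n1_def using nh c by (simp add: hom_iff)
  have sn2: "str C n2 = cp C (str C n) j2" unfolding n2_def using nh c by (simp add: hom_iff)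
  have sn1h: "str C n1 \<in> hom C X N" using st_hom[OF n1] .
  have sn2h: "str C n2 \<in> hom C X N" using st_hom[OF n2] .
  have s12: "ad n1 n2 = zero C N X"
    using sum_any[OF c(1) n1 n2 nh n1_def[symmetric] n2_def[symmetric] q] nq by simp
  have st12: "ad (str C n1) (str C n2) = zero C X N"
    using ad_st[OF n1 n2] s12 X NO by simp
  have jj1: "cp C j1 (str C j1) \<in> hom C P P" using cp_hom[OF c(5) c(3)] .
  have jj2: "cp C j2 (str C j2) \<in> hom C P P" using cp_hom[OF c(6) c(4)] .
  have nn2: "ad (cp C (str C n1) n1) (cp C (str C n2) n2) = idt C N"
  proof -
    have "idt C N = cp C (str C n) (cp C (idt C P) n)" using nn nh by (simp add: hom_iff)
    also have "\<dots> = cp C (str C n) (cp C (ad (cp C j1 (str C j1)) (cp C j2 (str C j2))) n)"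
      using bp_id[OF c(1)] by simp
    also have "\<dots> = cp C (str C n) (ad (cp C (cp C j1 (str C j1)) n) (cp C (cp C j2 (str C j2)) n))"
      using ad_cp_r[OF jj1 jj2 nh] by simp
    also have "\<dots> = ad (cp C (str C n) (cp C (cp C j1 (str C j1)) n)) (cp C (str C n) (cp C (cp C j2 (str C j2)) n))"
      using ad_cp_l[OF cp_hom[OF nh jj1] cp_hom[OF nh jj2] st_hom[OF nh]] .
    also have "\<dots> = ad (cp C (str C n1) n1) (cp C (str C n2) n2)"
      unfolding sn1 sn2 unfolding n1_def n2_def using nh c by (simp add: hom_iff assoc)
    finally show ?thesis by simp
  qed
  have n11: "cp C (str C n1) n1 \<in> hom C N N" using cp_hom[OF n1 sn1h] .
  have n12: "cp C (str C n1) n2 \<in> hom C N N" using cp_hom[OF n2 sn1h] .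
  have n22: "cp C (str C n2) n2 \<in> hom C N N" using cp_hom[OF n2 sn2h] .
  have eqn: "cp C (str C n1) n1 = cp C (str C n2) n2"
  proof -
    have "cp C (str C n1) n1 = ad (cp C (str C n1) n1) (zero C N N)" using ad_zero_r[OF n11] by simp
    also have "\<dots> = ad (cp C (str C n1) n1) (cp C (ad (str C n1) (str C n2)) n2)"
      using st12 n2 X NO by (simp add: hom_iff)
    also have "\<dots> = ad (cp C (str C n1) n1) (ad (cp C (str C n1) n2) (cp C (str C n2) n2))"
      using ad_cp_r[OF sn1h sn2h n2] by simp
    also have "\<dots> = ad (ad (cp C (str C n1) n1) (cp C (str C n1) n2)) (cp C (str C n2) n2)"
      using ad_assoc[OF n11 n12 n22] by simp
    also have "\<dots> = ad (cp C (str C n1) (ad n1 n2)) (cp C (str C n2) n2)"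
      using ad_cp_l[OF n1 n2 sn1h] by simp
    also have "\<dots> = cp C (str C n2) n2" using s12 ad_zero_l[OF n22] sn1h X NO by (simp add: hom_iff)
    finally show ?thesis .
  qed
  note kg = kerD[OF g]
  have dg: "dom C g = P" using kg(2) D(1) by (simp add: hom_iff)
  define Zg where "Zg = cod C g"
  have gh: "g \<in> hom C P Zg" using kg(1) dg unfolding Zg_def by (simp add: hom_iff)
  have gD: "cp C g D = zero C X Zg" using kg(3) D(1) unfolding Zg_def by (simp add: hom_iff)
  have qgz: "cp C q (str C g) = zero C Zg X"
  proof -
    have "cp C q (str C g) = str C (cp C g D)" unfolding D_def using q gh by (simp add: hom_iff)
    moreover have "Zg \<in> Ob C" using gh by (auto simp: hom_iff)
    ultimately show ?thesis using gD X by simp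
  qed
  have dq: "dom C q = P" "cod C q = X" using q(1) by (auto simp: hom_iff)
  have "\<exists>!h. h \<in> hom C Zg (dom C n) \<and> cp C n h = str C g"
    using kn(4)[of "str C g" Zg] st_hom[OF gh] qgz unfolding dq by simp
  then obtain t where t: "t \<in> hom C Zg N" "cp C n t = str C g" unfolding N_def by blast
  have g_fact: "g = cp C (str C t) (str C n)"
    using t nh gh by (metis hom_iff st_cp st_st)
  have Dker: "\<And>W x. x \<in> hom C W P \<Longrightarrow> cp C (str C n) x = zero C W N \<Longrightarrow> \<exists>u. u \<in> hom C W X \<and> cp C D u = x"
  proof -
    fix W x assume x: "x \<in> hom C W P" and z: "cp C (str C n) x = zero C W N"
    have WO: "W \<in> Ob C" using x by (auto simp: hom_iff)
    have "cp C g x = cp C (str C t) (cp C (str C n) x)"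
      unfolding g_fact using x nh t by (simp add: hom_iff assoc)
    also have "\<dots> = zero C W Zg" unfolding z using t WO NO by (simp add: hom_iff)
    finally have "cp C g x = zero C W (cod C g)" unfolding Zg_def .
    then have "\<exists>!h. h \<in> hom C W (dom C D) \<and> cp C D h = x" using kg(4)[of x W] x dg by simp
    then show "\<exists>u. u \<in> hom C W X \<and> cp C D u = x" using D(1) by (auto simp: hom_iff)
  qed
  define w where "w = ad (cp C n1 (str C n1)) (cp C n1 (str C n1))"
  have m11: "cp C n1 (str C n1) \<in> hom C X X" using cp_hom[OF sn1h n1] .
  have m21: "cp C n2 (str C n1) \<in> hom C X X" using cp_hom[OF sn1h n2] .
  have wh: "w \<in> hom C X X" unfolding w_def using ad_hom[OF m11 m11] .
  obtain x where x: "x \<in> hom C X P" "cp C (str C j1) x = idt C X" "cp C (str C j2) x = w"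
    using bp_pair[OF c(1) id_hom[OF X] wh] by blast
  have snh: "str C n \<in> hom C P N" using st_hom[OF nh] .
  have A1: "cp C (str C n1) (cp C n1 (str C n1)) \<in> hom C X N" using cp_hom[OF m11 sn1h] .
  have A2: "cp C (str C n2) (cp C n1 (str C n1)) \<in> hom C X N" using cp_hom[OF m11 sn2h] .
  have nx: "cp C (str C n) x = zero C X N"
  proof -
    have "cp C (str C n) x = cp C (str C n) (cp C (idt C P) x)" using x(1) by (simp add: hom_iff)
    also have "\<dots> = cp C (str C n) (ad (cp C (cp C j1 (str C j1)) x) (cp C (cp C j2 (str C j2)) x))"
      using bp_id[OF c(1)] ad_cp_r[OF jj1 jj2 x(1)] by simp
    also have "\<dots> = ad (cp C (str C n) (cp C (cp C j1 (str C j1)) x)) (cp C (str C n) (cp C (cp C j2 (str C j2)) x))"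
      using ad_cp_l[OF cp_hom[OF x(1) jj1] cp_hom[OF x(1) jj2] snh] .
    also have "\<dots> = ad (cp C (str C n1) (cp C (str C j1) x)) (cp C (str C n2) (cp C (str C j2) x))"
    proof -
      have "cp C (str C n) (cp C (cp C j1 (str C j1)) x) = cp C (cp C (str C n) j1) (cp C (str C j1) x)"
        using nh c(3,5) x(1) by (simp add: hom_iff assoc)
      moreover have "cp C (str C n) (cp C (cp C j2 (str C j2)) x) = cp C (cp C (str C n) j2) (cp C (str C j2) x)"
        using nh c(4,6) x(1) by (simp add: hom_iff assoc)
      ultimately show ?thesis unfolding sn1 sn2 by simp
    qed
    also have "\<dots> = ad (str C n1) (cp C (str C n2) w)" using x sn1h by (simp add: hom_iff)
    finally have e0: "cp C (str C n) x = ad (str C n1) (cp C (str C n2) w)" .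
    have e1: "cp C (str C n2) w = ad (cp C (str C n2) (cp C n1 (str C n1))) (cp C (str C n2) (cp C n1 (str C n1)))"
      unfolding w_def using ad_cp_l[OF m11 m11 sn2h] .
    have "str C n1 = cp C (idt C N) (str C n1)" using sn1h by (simp add: hom_iff)
    also have "\<dots> = cp C (ad (cp C (str C n1) n1) (cp C (str C n1) n1)) (str C n1)" using nn2 eqn by simp
    also have "\<dots> = ad (cp C (cp C (str C n1) n1) (str C n1)) (cp C (cp C (str C n1) n1) (str C n1))"
      using ad_cp_r[OF n11 n11 sn1h] .
    also have "cp C (cp C (str C n1) n1) (str C n1) = cp C (str C n1) (cp C n1 (str C n1))"
      using assoc_h[OF sn1h n1 sn1h] by simp
    finally have e2: "str C n1 = ad (cp C (str C n1) (cp C n1 (str C n1))) (cp C (str C n1) (cp C n1 (str C n1)))" .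
    have e3: "ad (ad (cp C (str C n1) (cp C n1 (str C n1))) (cp C (str C n1) (cp C n1 (str C n1))))
        (ad (cp C (str C n2) (cp C n1 (str C n1))) (cp C (str C n2) (cp C n1 (str C n1)))) =
      ad (ad (cp C (str C n1) (cp C n1 (str C n1))) (cp C (str C n2) (cp C n1 (str C n1))))
        (ad (cp C (str C n1) (cp C n1 (str C n1))) (cp C (str C n2) (cp C n1 (str C n1))))"
      using interchange[OF A1 A1 A2 A2] .
    have e4: "ad (cp C (str C n1) (cp C n1 (str C n1))) (cp C (str C n2) (cp C n1 (str C n1))) =
       cp C (ad (str C n1) (str C n2)) (cp C n1 (str C n1))"
      using ad_cp_r[OF sn1h sn2h m11] by simp
    have e5: "cp C (ad (str C n1) (str C n2)) (cp C n1 (str C n1)) = zero C X N" using st12 m11 X NO by (simp add: hom_iff)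
    have e6: "ad (zero C X N) (zero C X N) = zero C X N" using ad_zero_l[OF zero_hom[OF X NO, THEN conjunct1]] .
    show ?thesis unfolding e0 e1 apply (subst e2) unfolding e3 e4 e5 e6 ..
  qed
  obtain u where u: "u \<in> hom C X X" "cp C D u = x" using Dker[OF x(1) nx] by blast
  have "u = idt C X"
    using x(2) u D(1) c(5) assoc_h[OF u(1) D(1) c(5)] D(2) by (simp add: hom_iff)
  moreover have "w = u"
    using x(3) u D(1) c(6) assoc_h[OF u(1) D(1) c(6)] D(3) by (simp add: hom_iff)
  ultimately have w1: "w = idt C X" by simp
  define v where "v = ad (cp C n2 (str C n1)) (cp C n2 (str C n1))"
  have vh: "v \<in> hom C X X" unfolding v_def using ad_hom[OF m21 m21] .
  have "ad (idt C X) v = ad (ad (cp C n1 (str C n1)) (cp C n1 (str C n1))) (ad (cp C n2 (str C n1)) (cp C n2 (str C n1)))"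
    using w1 unfolding w_def v_def by simp
  also have "\<dots> = ad (ad (cp C n1 (str C n1)) (cp C n2 (str C n1))) (ad (cp C n1 (str C n1)) (cp C n2 (str C n1)))"
    using interchange[OF m11 m11 m21 m21] .
  also have "ad (cp C n1 (str C n1)) (cp C n2 (str C n1)) = cp C (ad n1 n2) (str C n1)"
    using ad_cp_r[OF n1 n2 sn1h] by simp
  also have "\<dots> = zero C X X" using s12 sn1h X NO by (simp add: hom_iff)
  finally have "ad (idt C X) v = zero C X X" using ad_zero_l[OF zero_hom[OF X X, THEN conjunct1]] by simp
  then show ?thesis using vh by blast
qed

definition "negX Y = (SOME v. v \<in> hom C Y Y \<and> ad (idt C Y) v = zero C Y Y)"
definition "ng f = cp C (negX (cod C f)) f"

lemma negX: "Y \<in> Ob C \<Longrightarrow> negX Y \<in> hom C Y Y \<and> ad (idt C Y) (negX Y) = zero C Y Y"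
  unfolding negX_def using neg_ex by (rule someI_ex)

lemma ng_hom: "f \<in> hom C X Y \<Longrightarrow> ng f \<in> hom C X Y"
  unfolding ng_def using negX cp_hom by (auto simp: hom_iff)

lemma ad_ng: assumes f: "f \<in> hom C X Y" shows "ad f (ng f) = zero C X Y"
proof -
  have Y: "Y \<in> Ob C" "cod C f = Y" and X: "X \<in> Ob C" using f by (auto simp: hom_iff)
  note v = negX[OF Y(1)]
  have "ad f (ng f) = ad (cp C (idt C Y) f) (cp C (negX Y) f)" unfolding ng_def Y(2) using f by (simp add: hom_iff)
  also have "\<dots> = cp C (ad (idt C Y) (negX Y)) f" using ad_cp_r[OF id_hom[OF Y(1)] v[THEN conjunct1] f] by simp
  also have "\<dots> = zero C X Y" using v f Y X by (simp add: hom_iff)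
  finally show ?thesis .
qed

lemma ad_ng_l: assumes f: "f \<in> hom C X Y" shows "ad (ng f) f = zero C X Y"
  using ad_ng[OF f] ad_comm[OF f ng_hom[OF f]] by simp

lemma ng_unique: assumes f: "f \<in> hom C X Y" and g: "g \<in> hom C X Y" and e: "ad f g = zero C X Y"
  shows "g = ng f"
proof -
  have "g = ad (zero C X Y) g" using ad_zero_l[OF g] by simp
  also have "\<dots> = ad (ad (ng f) f) g" using ad_ng_l[OF f] by simp
  also have "\<dots> = ad (ng f) (ad f g)" using ad_assoc[OF ng_hom[OF f] f g] .
  also have "\<dots> = ng f" using e ad_zero_r[OF ng_hom[OF f]] by simp
  finally show ?thesis .
qed

lemma ad_cancel: assumes a: "a \<in> hom C X Y" and b: "b \<in> hom C X Y" and c: "c \<in> hom C X Y"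
  and e: "ad a b = ad a c" shows "b = c"
proof -
  have "b = ad (ad (ng a) a) b" using ad_ng_l[OF a] ad_zero_l[OF b] by simp
  also have "\<dots> = ad (ng a) (ad a c)" using ad_assoc[OF ng_hom[OF a] a b] e by simp
  also have "\<dots> = ad (ad (ng a) a) c" using ad_assoc[OF ng_hom[OF a] a c] by simp
  also have "\<dots> = c" using ad_ng_l[OF a] ad_zero_l[OF c] by simp
  finally show ?thesis .
qed

lemma ad_move: assumes a: "a \<in> hom C X Y" and b: "b \<in> hom C X Y" and c: "c \<in> hom C X Y"
  and e: "ad a b = c" shows "a = ad c (ng b)"
proof -
  have "ad c (ng b) = ad a (ad b (ng b))" using e ad_assoc[OF a b ng_hom[OF b]] by simp
  then show ?thesis using ad_ng[OF b] ad_zero_r[OF a] by simp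
qed

lemma ng_cp_r: assumes f: "f \<in> hom C X Y" and k: "k \<in> hom C W X"
  shows "cp C (ng f) k = ng (cp C f k)"
proof (rule ng_unique[OF cp_hom[OF k f] cp_hom[OF k ng_hom[OF f]]])
  have W: "W \<in> Ob C" and Y: "Y \<in> Ob C" using k f by (auto simp: hom_iff)
  show "ad (cp C f k) (cp C (ng f) k) = zero C W Y"
    using ad_cp_r[OF f ng_hom[OF f] k] ad_ng[OF f] k W Y by (simp add: hom_iff)
qed

lemma ng_cp_l: assumes f: "f \<in> hom C X Y" and h: "h \<in> hom C Y Z"
  shows "cp C h (ng f) = ng (cp C h f)"
proof (rule ng_unique[OF cp_hom[OF f h] cp_hom[OF ng_hom[OF f] h]])
  have X: "X \<in> Ob C" and Z: "Z \<in> Ob C" using h f by (auto simp: hom_iff)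
  show "ad (cp C h f) (cp C h (ng f)) = zero C X Z"
    using ad_cp_l[OF f ng_hom[OF f] h] ad_ng[OF f] h X Z by (simp add: hom_iff)
qed

lemma ng_st: assumes f: "f \<in> hom C X Y" shows "str C (ng f) = ng (str C f)"
proof (rule ng_unique[OF st_hom[OF f] st_hom[OF ng_hom[OF f]]])
  have X: "X \<in> Ob C" and Y: "Y \<in> Ob C" using f by (auto simp: hom_iff)
  show "ad (str C f) (str C (ng f)) = zero C Y X"
    using ad_st[OF f ng_hom[OF f]] ad_ng[OF f] X Y by simp
qed

lemma ng_ng: assumes f: "f \<in> hom C X Y" shows "ng (ng f) = f"
  using ng_unique[OF ng_hom[OF f] f ad_ng_l[OF f]] by simp

lemma ng_zero: assumes X: "X \<in> Ob C" and Y: "Y \<in> Ob C" shows "ng (zero C X Y) = zero C X Y"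
  using ng_unique[OF zero_hom[OF X Y, THEN conjunct1] zero_hom[OF X Y, THEN conjunct1]]
    ad_zero_l[OF zero_hom[OF X Y, THEN conjunct1]] by simp

lemma ng_ad: assumes f: "f \<in> hom C X Y" and g: "g \<in> hom C X Y" shows "ng (ad f g) = ad (ng f) (ng g)"
proof -
  have "ad (ad f g) (ad (ng f) (ng g)) = ad (ad f (ng f)) (ad g (ng g))"
    using interchange[OF f g ng_hom[OF f] ng_hom[OF g]] .
  also have "\<dots> = zero C X Y" using ad_ng[OF f] ad_ng[OF g] ad_zero_l[OF zero_hom[THEN conjunct1]] f
    by (auto simp: hom_iff)
  finally show ?thesis using ng_unique[OF ad_hom[OF f g] ad_hom[OF ng_hom[OF f] ng_hom[OF g]]] by simp
qed

lemma ad_ac: assumes a: "a \<in> hom C X Y" and b: "b \<in> hom C X Y" and c: "c \<in> hom C X Y"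
  shows "ad a (ad b c) = ad b (ad a c)"
  using ad_assoc[OF a b c] ad_assoc[OF b a c] ad_comm[OF a b] by simp

lemma proj_kernel:
  assumes k: "is_kernel C k g" "isometry C k" and E: "E \<in> hom C W W" "str C E = E"
    and dg: "dom C g = W" and gE: "cp C g E = zero C W (cod C g)" and Ek: "cp C E k = k"
  shows "E = cp C k (str C k)"
proof -
  note kd = kerD[OF k(1)]
  define K where "K = dom C k"
  have kh: "k \<in> hom C K W" using kd(2) dg unfolding K_def by simp
  have kk: "cp C (str C k) k = idt C K" using k(2) unfolding isometry_def K_def by simp
  obtain h where h: "h \<in> hom C W K" "cp C k h = E"
    using kd(4)[of E W] E(1) dg gE unfolding K_def by auto
  have "cp C (str C k) E = h" using h kk assoc_h[OF h(1) kh st_hom[OF kh]] by (simp add: hom_iff)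
  then have E1: "E = cp C k (cp C (str C k) E)" using h by simp
  have "E = str C E" using E by simp
  also have "\<dots> = cp C (cp C (str C E) k) (str C k)"
    apply (subst E1) using E kh by (simp add: hom_iff assoc)
  also have "\<dots> = cp C k (str C k)" using E(2) Ek by simp
  finally show ?thesis .
qed

lemma proj_compl:
  assumes s: "s \<in> hom C Y S" "isometry C s" and k: "is_kernel C k (str C s)" "isometry C k"
  shows "ad (cp C s (str C s)) (cp C k (str C k)) = idt C S"
proof -
  have S: "S \<in> Ob C" and Y: "Y \<in> Ob C" using s by (auto simp: hom_iff)
  have ss: "cp C (str C s) s = idt C Y" using s unfolding isometry_def by (simp add: hom_iff)
  have sh: "str C s \<in> hom C S Y" using st_hom[OF s(1)] .
  have p: "cp C s (str C s) \<in> hom C S S" using cp_hom[OF sh s(1)] .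
  define E where "E = ad (idt C S) (ng (cp C s (str C s)))"
  have Eh: "E \<in> hom C S S" unfolding E_def using ad_hom[OF id_hom[OF S] ng_hom[OF p]] .
  have pst: "str C (cp C s (str C s)) = cp C s (str C s)" using s by (simp add: hom_iff)
  have Est: "str C E = E" unfolding E_def using ad_st[OF id_hom[OF S] ng_hom[OF p]] ng_st[OF p] pst S by simp
  have dg: "dom C (str C s) = S" "cod C (str C s) = Y" using sh by (auto simp: hom_iff)
  have sp: "cp C (str C s) (cp C s (str C s)) = str C s"
    using assoc_h[OF sh s(1) sh] ss sh by (simp add: hom_iff)
  have gE: "cp C (str C s) E = zero C S Y"
    unfolding E_def using ad_cp_l[OF id_hom[OF S] ng_hom[OF p] sh] ng_cp_l[OF p sh] sp ad_ng[OF sh] sh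
    by (simp add: hom_iff)
  note kd = kerD[OF k(1)]
  define K where "K = dom C k"
  have kh: "k \<in> hom C K S" using kd(2) dg unfolding K_def by simp
  have KO: "K \<in> Ob C" using kh by (auto simp: hom_iff)
  have sk: "cp C (str C s) k = zero C K Y" using kd(3) dg unfolding K_def by simp
  have "cp C (cp C s (str C s)) k = zero C K S"
    using assoc_h[OF kh sh s(1)] sk s KO Y by (simp add: hom_iff)
  then have Ek: "cp C E k = k"
    unfolding E_def using ad_cp_r[OF id_hom[OF S] ng_hom[OF p] kh] ng_cp_r[OF p kh] ng_zero[OF KO S]
      ad_zero_r[OF kh] kh by (simp add: hom_iff)
  have E: "E = cp C k (str C k)"
    using proj_kernel[OF k Eh Est dg(1) _ Ek] gE dg by simp
  have "ad (cp C s (str C s)) E = ad (idt C S) (ad (cp C s (str C s)) (ng (cp C s (str C s))))"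
    unfolding E_def using ad_ac[OF p id_hom[OF S] ng_hom[OF p]] .
  also have "\<dots> = idt C S" using ad_ng[OF p] ad_zero_r[OF id_hom[OF S]] by simp
  finally show ?thesis using E by simp
qed

lemma inv_iff: "a \<in> hom C X X \<Longrightarrow> invertible C a \<longleftrightarrow> (\<exists>b. b \<in> hom C X X \<and> cp C b a = idt C X \<and> cp C a b = idt C X)"
  unfolding invertible_def by (auto simp: hom_iff)

lemma SC_char:
  assumes f: "f \<in> hom C X Y"
  shows "strictly_contractive C f \<longleftrightarrow>
    (\<exists>W y. y \<in> hom C X W \<and> ad (cp C (str C f) f) (cp C (str C y) y) = idt C X \<and> invertible C (cp C (str C y) y))"
proof -
  have X: "X \<in> Ob C" and df: "dom C f = X" using f by (auto simp: hom_iff)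
  have ff: "cp C (str C f) f \<in> hom C X X" using cp_hom[OF f st_hom[OF f]] .
  have h1: "hermitian C (cp C (str C f) f)" unfolding hermitian_def using ff f by (simp add: hom_iff)
  have h2: "hermitian C (idt C X)" unfolding hermitian_def using X by (simp add: hom_iff id_hom)
  have dd: "dom C (cp C (str C f) f) = X" using ff by (simp add: hom_iff)
  have S: "\<And>W y. y \<in> hom C X W \<Longrightarrow> is_sum C (cp C (str C f) f) (cp C (str C y) y) (idt C X) \<longleftrightarrow>
      ad (cp C (str C f) f) (cp C (str C y) y) = idt C X"
  proof -
    fix W y assume y: "y \<in> hom C X W"
    have yy: "cp C (str C y) y \<in> hom C X X" using cp_hom[OF y st_hom[OF y]] .
    show "is_sum C (cp C (str C f) f) (cp C (str C y) y) (idt C X) \<longleftrightarrow>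
      ad (cp C (str C f) f) (cp C (str C y) y) = idt C X"
      unfolding is_sum_iff using ff yy by auto
  qed
  show ?thesis unfolding strictly_contractive_def herm_lt_def df dd dom_id[OF X] using h1 h2 S by blast
qed

lemma coprod_D:
  assumes "is_coproduct C A B S s1 s2"
  shows "S \<in> Ob C" "s1 \<in> hom C A S" "s2 \<in> hom C B S"
    "\<And>Z g1 g2. g1 \<in> hom C A Z \<Longrightarrow> g2 \<in> hom C B Z \<Longrightarrow> \<exists>!h. h \<in> hom C S Z \<and> cp C h s1 = g1 \<and> cp C h s2 = g2"
  using assms unfolding is_coproduct_def by auto

lemma coprod_ext:
  assumes B: "is_coproduct C A B S s1 s2" and x: "x \<in> hom C S Z" and y: "y \<in> hom C S Z"
    and e: "cp C x s1 = cp C y s1" "cp C x s2 = cp C y s2"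
  shows "x = y"
proof -
  note b = coprod_D[OF B]
  note E = b(4)[OF cp_hom[OF b(2) x] cp_hom[OF b(3) x]]
  have X: "x \<in> hom C S Z \<and> cp C x s1 = cp C x s1 \<and> cp C x s2 = cp C x s2" using x by (intro conjI refl)
  have Y: "y \<in> hom C S Z \<and> cp C y s1 = cp C x s1 \<and> cp C y s2 = cp C x s2"
    using y e(1)[symmetric] e(2)[symmetric] by (intro conjI)
  show ?thesis using ex1_unique[OF E X Y] .
qed

lemma coprod_ext_st:
  assumes B: "is_coproduct C A B S s1 s2" and x: "x \<in> hom C Z S" and y: "y \<in> hom C Z S"
    and e: "cp C (str C s1) x = cp C (str C s1) y" "cp C (str C s2) x = cp C (str C s2) y"
  shows "x = y"
proof -
  note b = coprod_D[OF B]
  have "str C x = str C y"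
  proof (rule coprod_ext[OF B st_hom[OF x] st_hom[OF y]])
    show "cp C (str C x) s1 = cp C (str C y) s1"
      using arg_cong[OF e(1), of "str C"] x y b by (simp add: hom_iff)
    show "cp C (str C x) s2 = cp C (str C y) s2"
      using arg_cong[OF e(2), of "str C"] x y b by (simp add: hom_iff)
  qed
  then show ?thesis using x y st_inj by (auto simp: hom_iff)
qed

lemma isoD: "isometry C s \<Longrightarrow> s \<in> hom C X Y \<Longrightarrow> cp C (str C s) s = idt C X"
  unfolding isometry_def by (simp add: hom_iff)

lemma partB:
  assumes f: "f \<in> hom C X Y" and cd: "codilation C f S s1 s2" and cop: "is_coproduct C X Y S s1 s2"
  shows "\<exists>W y. y \<in> hom C X W \<and> ad (cp C (str C f) f) (cp C (str C y) y) = idt C X \<and> invertible C (cp C (str C y) y)"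
proof -
  have X: "X \<in> Ob C" and Y: "Y \<in> Ob C" and df: "dom C f = X" "cod C f = Y" using f by (auto simp: hom_iff)
  have s1: "s1 \<in> hom C X S" and s2: "s2 \<in> hom C Y S" and i1: "isometry C s1" and i2: "isometry C s2"
    and fe: "cp C (str C s2) s1 = f"
    using cd unfolding codilation_def df by auto
  have SO: "S \<in> Ob C" using s1 by (auto simp: hom_iff)
  have s11: "cp C (str C s1) s1 = idt C X" using isoD[OF i1 s1] .
  have s22: "cp C (str C s2) s2 = idt C Y" using isoD[OF i2 s2] .
  have s1h: "str C s1 \<in> hom C S X" and s2h: "str C s2 \<in> hom C S Y" using st_hom s1 s2 by auto
  obtain k where k: "is_kernel C k (str C s2)" "isometry C k" using R3[of "str C s2"] s2h by (auto simp: hom_iff)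
  note kd = kerD[OF k(1)]
  define K where "K = dom C k"
  have kh: "k \<in> hom C K S" using kd(2) s2h unfolding K_def by (simp add: hom_iff)
  have KO: "K \<in> Ob C" using kh by (auto simp: hom_iff)
  have khs: "str C k \<in> hom C S K" using st_hom[OF kh] .
  have PC: "ad (cp C s2 (str C s2)) (cp C k (str C k)) = idt C S" using proj_compl[OF s2 i2 k] .
  have p2: "cp C s2 (str C s2) \<in> hom C S S" using cp_hom[OF s2h s2] .
  have pk: "cp C k (str C k) \<in> hom C S S" using cp_hom[OF khs kh] .
  define y where "y = cp C (str C k) s1"
  have yh: "y \<in> hom C X K" unfolding y_def using cp_hom[OF s1 khs] .
  have yst: "str C y = cp C (str C s1) k" unfolding y_def using s1 kh by (simp add: hom_iff)
  have sum: "ad (cp C (str C f) f) (cp C (str C y) y) = idt C X"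
  proof -
    have a: "cp C (str C s1) (cp C (cp C s2 (str C s2)) s1) = cp C (str C f) f"
      unfolding fe[symmetric] using s1 s2 by (simp add: hom_iff assoc)
    have b: "cp C (str C s1) (cp C (cp C k (str C k)) s1) = cp C (str C y) y"
      unfolding yst unfolding y_def using s1 kh by (simp add: hom_iff assoc)
    have "cp C (str C s1) (cp C (idt C S) s1) = cp C (str C s1) (ad (cp C (cp C s2 (str C s2)) s1) (cp C (cp C k (str C k)) s1))"
      unfolding PC[symmetric] using ad_cp_r[OF p2 pk s1] by simp
    also have "\<dots> = ad (cp C (str C f) f) (cp C (str C y) y)"
      using ad_cp_l[OF cp_hom[OF s1 p2] cp_hom[OF s1 pk] s1h] a b by simp
    finally show ?thesis using s11 s1 by (simp add: hom_iff)
  qed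
  note cd4 = coprod_D(4)[OF cop]
  obtain h where h: "h \<in> hom C S X" "cp C h s1 = idt C X" "cp C h s2 = zero C Y X"
    using cd4[OF id_hom[OF X] zero_hom[OF Y X, THEN conjunct1]] by blast
  obtain gg where gg: "gg \<in> hom C S Y" "cp C gg s1 = zero C X Y" "cp C gg s2 = idt C Y"
    using cd4[OF zero_hom[OF X Y, THEN conjunct1] id_hom[OF Y]] by blast
  have sh: "cp C s1 h \<in> hom C S S" and sg: "cp C s2 gg \<in> hom C S S" using cp_hom h gg s1 s2 by blast+
  have ID: "ad (cp C s1 h) (cp C s2 gg) = idt C S"
  proof (rule coprod_ext[OF cop ad_hom[OF sh sg] id_hom[OF SO]])
    show "cp C (ad (cp C s1 h) (cp C s2 gg)) s1 = cp C (idt C S) s1"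
      using ad_cp_r[OF sh sg s1] assoc_h[OF s1 h(1) s1] assoc_h[OF s1 gg(1) s2] h gg ad_zero_r[OF s1] s1 s2 X
      by (simp add: hom_iff)
    show "cp C (ad (cp C s1 h) (cp C s2 gg)) s2 = cp C (idt C S) s2"
      using ad_cp_r[OF sh sg s2] assoc_h[OF s2 h(1) s1] assoc_h[OF s2 gg(1) s2] h gg ad_zero_l[OF s2] s1 s2 Y
      by (simp add: hom_iff)
  qed
  have hsh: "str C h \<in> hom C X S" using st_hom[OF h(1)] .
  have "cp C (str C s2) (str C h) = str C (cp C h s2)" using st_cp[of s2 h] h s2 by (simp add: hom_iff)
  then have s2h': "cp C (str C s2) (str C h) = zero C X Y" using h(3) X Y by simp
  have kkh: "cp C k (cp C (str C k) (str C h)) = str C h"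
  proof -
    have "str C h = cp C (idt C S) (str C h)" using hsh by (simp add: hom_iff)
    also have "\<dots> = ad (cp C (cp C s2 (str C s2)) (str C h)) (cp C (cp C k (str C k)) (str C h))"
      unfolding PC[symmetric] using ad_cp_r[OF p2 pk hsh] .
    also have "cp C (cp C s2 (str C s2)) (str C h) = zero C X S"
      using assoc_h[OF hsh s2h s2] s2h' s2 X by (simp add: hom_iff)
    also have "cp C (cp C k (str C k)) (str C h) = cp C k (cp C (str C k) (str C h))"
      using assoc_h[OF hsh khs kh] by simp
    finally show ?thesis using ad_zero_l[OF cp_hom[OF cp_hom[OF hsh khs] kh]] by simp
  qed
  have ks2: "cp C (str C k) s2 = zero C Y K"
    using arg_cong[OF kd(3), of "str C"] kh s2 Y KO unfolding K_def[symmetric] by (simp add: hom_iff)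
  have yh2: "cp C y h = str C k"
  proof -
    have "str C k = cp C (str C k) (idt C S)" using khs by (simp add: hom_iff)
    also have "\<dots> = ad (cp C (str C k) (cp C s1 h)) (cp C (str C k) (cp C s2 gg))"
      unfolding ID[symmetric] using ad_cp_l[OF sh sg khs] .
    also have "cp C (str C k) (cp C s2 gg) = zero C S K"
      using assoc_h[OF gg(1) s2 khs] ks2 gg KO by (simp add: hom_iff)
    also have "cp C (str C k) (cp C s1 h) = cp C y h" unfolding y_def using assoc_h[OF h(1) s1 khs] .
    finally show ?thesis using ad_zero_r[OF cp_hom[OF h(1) yh]] by simp
  qed
  define e where "e = cp C h (str C h)"
  have eh: "e \<in> hom C X X" unfolding e_def using cp_hom[OF hsh h(1)] .
  have est: "str C e = e" unfolding e_def using h by (simp add: hom_iff)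
  have yy: "cp C (str C y) y \<in> hom C X X" using cp_hom[OF yh st_hom[OF yh]] .
  have yyst: "str C (cp C (str C y) y) = cp C (str C y) y" using yh by (simp add: hom_iff)
  have r1: "cp C (cp C (str C y) y) e = idt C X"
  proof -
    have "cp C (cp C (str C y) y) e = cp C (str C s1) (cp C k (cp C (cp C y h) (str C h)))"
      unfolding e_def yst using s1 kh yh h by (simp add: hom_iff assoc)
    also have "\<dots> = cp C (str C s1) (str C h)" unfolding yh2 kkh ..
    also have "\<dots> = str C (cp C h s1)" using h(1) s1 by (simp add: hom_iff)
    also have "\<dots> = idt C X" using h X by simp
    finally show ?thesis .
  qed
  have r2: "cp C e (cp C (str C y) y) = idt C X"
    using arg_cong[OF r1, of "str C"] est yyst eh yy X by (simp add: hom_iff)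
  have "invertible C (cp C (str C y) y)" unfolding inv_iff[OF yy] using eh r1 r2 by blast
  then show ?thesis using yh sum by blast
qed

lemma partA:
  assumes f: "f \<in> hom C X Y" and y: "y \<in> hom C X W"
    and sum: "ad (cp C (str C f) f) (cp C (str C y) y) = idt C X" and inv: "invertible C (cp C (str C y) y)"
  shows "\<exists>S s1 s2. codilation C f S s1 s2 \<and> is_coproduct C X Y S s1 s2"
proof -
  have X: "X \<in> Ob C" and Y: "Y \<in> Ob C" and WO: "W \<in> Ob C" and df: "dom C f = X" "cod C f = Y"
    using f y by (auto simp: hom_iff)
  define d where "d = cp C (str C y) y"
  have ysh: "str C y \<in> hom C W X" using st_hom[OF y] .
  have fsh: "str C f \<in> hom C Y X" using st_hom[OF f] .
  have dh: "d \<in> hom C X X" unfolding d_def using cp_hom[OF y ysh] .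
  have dst: "str C d = d" unfolding d_def using y by (simp add: hom_iff)
  obtain e where e: "e \<in> hom C X X" "cp C e d = idt C X" "cp C d e = idt C X"
    using inv inv_iff[OF dh] unfolding d_def by blast
  have est: "str C e = e"
  proof -
    have "cp C (str C e) d = str C (cp C d e)" using dst e(1) dh by (simp add: hom_iff)
    then have ed: "cp C (str C e) d = idt C X" using e(3) X by simp
    have "str C e = cp C (str C e) (cp C d e)" using e(3) e(1) by (simp add: hom_iff)
    also have "\<dots> = cp C (cp C (str C e) d) e" using assoc_h[OF e(1) dh st_hom[OF e(1)]] .
    also have "\<dots> = e" using ed e(1) by (simp add: hom_iff)
    finally show ?thesis .
  qed
  define E where "E = cp C y (cp C e (str C y))"
  have Eh: "E \<in> hom C W W" unfolding E_def using cp_hom[OF cp_hom[OF ysh e(1)] y] .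
  have Est: "str C E = E" unfolding E_def using y e(1) est by (simp add: hom_iff assoc)
  have Ey: "cp C E y = y"
  proof -
    have "cp C E y = cp C y (cp C e d)" unfolding E_def d_def using y e(1) by (simp add: hom_iff assoc)
    then show ?thesis using e(2) y by (simp add: hom_iff)
  qed
  have EE: "cp C E E = E"
  proof -
    have "cp C E E = cp C (cp C E y) (cp C e (str C y))" unfolding E_def using y e(1) by (simp add: hom_iff assoc)
    then show ?thesis unfolding Ey by (simp add: E_def)
  qed
  define g where "g = ad (idt C W) (ng E)"
  have gh: "g \<in> hom C W W" unfolding g_def using ad_hom[OF id_hom[OF WO] ng_hom[OF Eh]] .
  obtain k where k: "is_kernel C k g" "isometry C k" using R3[of g] gh by (auto simp: hom_iff)
  note kd = kerD[OF k(1)]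
  define K where "K = dom C k"
  have kh: "k \<in> hom C K W" using kd(2) gh unfolding K_def by (simp add: hom_iff)
  have KO: "K \<in> Ob C" using kh by (auto simp: hom_iff)
  have ksh: "str C k \<in> hom C W K" using st_hom[OF kh] .
  have kk: "cp C (str C k) k = idt C K" using isoD[OF k(2) kh] .
  have gE: "cp C g E = zero C W W"
    unfolding g_def using ad_cp_r[OF id_hom[OF WO] ng_hom[OF Eh] Eh] ng_cp_r[OF Eh Eh] EE ad_ng[OF Eh] Eh
    by (simp add: hom_iff)
  have gk: "cp C g k = zero C K W" using kd(3) gh unfolding K_def by (simp add: hom_iff)
  have "ad k (ng (cp C E k)) = zero C K W"
    using gk unfolding g_def using ad_cp_r[OF id_hom[OF WO] ng_hom[OF Eh] kh] ng_cp_r[OF Eh kh] kh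
    by (simp add: hom_iff)
  then have "ng (cp C E k) = ng k" using ng_unique[OF kh ng_hom[OF cp_hom[OF kh Eh]]] by simp
  then have Ek: "cp C E k = k" using ng_ng[OF kh] ng_ng[OF cp_hom[OF kh Eh]] by metis
  have Ekk: "E = cp C k (str C k)"
    using proj_kernel[OF k Eh Est _ _ Ek] gE gh by (simp add: hom_iff)
  define y' where "y' = cp C (str C k) y"
  define yi where "yi = cp C e (cp C (str C y) k)"
  have y'h: "y' \<in> hom C X K" unfolding y'_def using cp_hom[OF y ksh] .
  have yih: "yi \<in> hom C K X" unfolding yi_def using cp_hom[OF cp_hom[OF kh ysh] e(1)] .
  have inv1: "cp C yi y' = idt C X"
  proof -
    have "cp C yi y' = cp C e (cp C (str C y) (cp C (cp C k (str C k)) y))"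
      unfolding yi_def y'_def using y e(1) kh by (simp add: hom_iff assoc)
    also have "\<dots> = cp C e d" unfolding Ekk[symmetric] Ey d_def ..
    finally show ?thesis using e by simp
  qed
  have inv2: "cp C y' yi = idt C K"
  proof -
    have "cp C y' yi = cp C (str C k) (cp C E k)"
      unfolding yi_def y'_def E_def using y e(1) kh by (simp add: hom_iff assoc)
    also have "\<dots> = idt C K" unfolding Ek kk ..
    finally show ?thesis .
  qed
  have y'y': "cp C (str C y') y' = d"
  proof -
    have "cp C (str C y') y' = cp C (str C y) (cp C (cp C k (str C k)) y)"
      unfolding y'_def using y kh by (simp add: hom_iff assoc)
    also have "\<dots> = d" unfolding Ekk[symmetric] Ey d_def ..
    finally show ?thesis .
  qed
  define S where "S = PP Y K"
  define t1 where "t1 = i1 Y K"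
  define t2 where "t2 = i2 Y K"
  have c: "is_biproduct C Y K S t1 (str C t1) t2 (str C t2)" "S \<in> Ob C" "t1 \<in> hom C Y S" "t2 \<in> hom C K S"
    "str C t1 \<in> hom C S Y" "str C t2 \<in> hom C S K" "cp C (str C t1) t1 = idt C Y" "cp C (str C t2) t2 = idt C K"
    "cp C (str C t2) t1 = zero C Y K" "cp C (str C t1) t2 = zero C K Y"
    using cb[OF Y KO] unfolding S_def t1_def t2_def by auto
  have tf: "cp C t1 f \<in> hom C X S" using cp_hom[OF f c(3)] .
  have ty: "cp C t2 y' \<in> hom C X S" using cp_hom[OF y'h c(4)] .
  define s1 where "s1 = ad (cp C t1 f) (cp C t2 y')"
  have s1h: "s1 \<in> hom C X S" unfolding s1_def using ad_hom[OF tf ty] .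
  have hs1: "cp C h s1 = ad (cp C (cp C h t1) f) (cp C (cp C h t2) y')" if hh: "h \<in> hom C S Z" for Z h
    unfolding s1_def ad_cp_l[OF tf ty hh] assoc_h[OF f c(3) hh] assoc_h[OF y'h c(4) hh] ..
  have t1s1: "cp C (str C t1) s1 = f"
    using hs1[OF c(5)] c(7,10) f y'h ad_zero_r[OF f] X Y KO by (simp add: hom_iff)
  have t2s1: "cp C (str C t2) s1 = y'"
    using hs1[OF c(6)] c(8,9) f y'h ad_zero_l[OF y'h] X Y KO by (simp add: hom_iff)
  have ss1: "str C s1 \<in> hom C S X" using st_hom[OF s1h] .
  have st1: "cp C (str C s1) t1 = str C f"
    using arg_cong[OF t1s1, of "str C"] s1h c(3) by (simp add: hom_iff)
  have st2: "cp C (str C s1) t2 = str C y'"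
    using arg_cong[OF t2s1, of "str C"] s1h c(4) by (simp add: hom_iff)
  have iso1: "cp C (str C s1) s1 = idt C X"
    using hs1[OF ss1] st1 st2 y'y' sum unfolding d_def by simp
  have cod: "codilation C f S s1 t1"
    unfolding codilation_def isometry_def df using s1h c(3) iso1 c(7) t1s1 by (simp add: hom_iff)
  have cop: "is_coproduct C X Y S s1 t1"
    unfolding is_coproduct_def
  proof (intro conjI allI impI c(2) s1h c(3))
    fix Z g1 g2 assume G: "g1 \<in> hom C X Z \<and> g2 \<in> hom C Y Z"
    then have g1: "g1 \<in> hom C X Z" and g2: "g2 \<in> hom C Y Z" by auto
    have ZO: "Z \<in> Ob C" using g1 by (auto simp: hom_iff)
    have gf: "cp C g2 f \<in> hom C X Z" using cp_hom[OF f g2] .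
    define r where "r = cp C (ad g1 (ng (cp C g2 f))) yi"
    have rh: "r \<in> hom C K Z" unfolding r_def using cp_hom[OF yih ad_hom[OF g1 ng_hom[OF gf]]] .
    obtain h where h: "h \<in> hom C S Z" "cp C h t1 = g2" "cp C h t2 = r"
      using bp_copair[OF c(1) g2 rh] by blast
    have ry: "cp C r y' = ad g1 (ng (cp C g2 f))"
      unfolding r_def using assoc_h[OF y'h yih ad_hom[OF g1 ng_hom[OF gf]]] inv1 ad_hom[OF g1 ng_hom[OF gf]]
      by (simp add: hom_iff)
    have hs: "cp C h s1 = g1"
    proof -
      have "cp C h s1 = ad (cp C g2 f) (ad g1 (ng (cp C g2 f)))" using hs1[OF h(1)] h ry by simp
      also have "\<dots> = ad g1 (ad (cp C g2 f) (ng (cp C g2 f)))" using ad_ac[OF gf g1 ng_hom[OF gf]] .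
      also have "\<dots> = g1" using ad_ng[OF gf] ad_zero_r[OF g1] by simp
      finally show ?thesis .
    qed
    have uq: "\<And>h'. h' \<in> hom C S Z \<Longrightarrow> cp C h' s1 = g1 \<Longrightarrow> cp C h' t1 = g2 \<Longrightarrow> h' = h"
    proof -
      fix h' assume h': "h' \<in> hom C S Z" "cp C h' s1 = g1" "cp C h' t1 = g2"
      have a1: "ad (cp C g2 f) (cp C (cp C h' t2) y') = g1" using hs1[OF h'(1)] h' by simp
      have a2: "ad (cp C g2 f) (cp C (cp C h t2) y') = g1" using hs1[OF h(1)] h hs by simp
      have hh: "cp C h' t2 \<in> hom C K Z" "cp C h t2 \<in> hom C K Z" using cp_hom c(4) h'(1) h(1) by blast+
      have "cp C (cp C h' t2) y' = cp C (cp C h t2) y'"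
        using ad_cancel[OF gf cp_hom[OF y'h hh(1)] cp_hom[OF y'h hh(2)]] a1 a2 by simp
      then have "cp C (cp C (cp C h' t2) y') yi = cp C (cp C (cp C h t2) y') yi" by simp
      then have "cp C h' t2 = cp C h t2"
        using assoc_h[OF yih y'h hh(1)] assoc_h[OF yih y'h hh(2)] inv2 hh by (simp add: hom_iff)
      then show "h' = h" using bp_ext_r[OF c(1) h'(1) h(1)] h'(3) h(2) by simp
    qed
    show "\<exists>!h. h \<in> hom C S Z \<and> cp C h s1 = g1 \<and> cp C h t1 = g2"
      using h(1,2) hs uq by blast
  qed
  show ?thesis using cod cop by blast
qed

lemma codil_y:
  assumes f: "f \<in> hom C X Y" and s1: "s1 \<in> hom C X S" and s2: "s2 \<in> hom C Y S"
    and i1: "isometry C s1" and i2: "isometry C s2" and fe: "cp C (str C s2) s1 = f"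
  shows "\<exists>K y. y \<in> hom C X K \<and> ad (cp C (str C f) f) (cp C (str C y) y) = idt C X"
proof -
  have s11: "cp C (str C s1) s1 = idt C X" using isoD[OF i1 s1] .
  have s1h: "str C s1 \<in> hom C S X" and s2h: "str C s2 \<in> hom C S Y" using st_hom s1 s2 by auto
  obtain k where k: "is_kernel C k (str C s2)" "isometry C k" using R3[of "str C s2"] s2h by (auto simp: hom_iff)
  note kd = kerD[OF k(1)]
  define K where "K = dom C k"
  have kh: "k \<in> hom C K S" using kd(2) s2h unfolding K_def by (simp add: hom_iff)
  have khs: "str C k \<in> hom C S K" using st_hom[OF kh] .
  have PC: "ad (cp C s2 (str C s2)) (cp C k (str C k)) = idt C S" using proj_compl[OF s2 i2 k] .
  have p2: "cp C s2 (str C s2) \<in> hom C S S" using cp_hom[OF s2h s2] .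
  have pk: "cp C k (str C k) \<in> hom C S S" using cp_hom[OF khs kh] .
  define y where "y = cp C (str C k) s1"
  have yh: "y \<in> hom C X K" unfolding y_def using cp_hom[OF s1 khs] .
  have yst: "str C y = cp C (str C s1) k" unfolding y_def using s1 kh by (simp add: hom_iff)
  have a: "cp C (str C s1) (cp C (cp C s2 (str C s2)) s1) = cp C (str C f) f"
    unfolding fe[symmetric] using s1 s2 by (simp add: hom_iff assoc)
  have b: "cp C (str C s1) (cp C (cp C k (str C k)) s1) = cp C (str C y) y"
    unfolding yst unfolding y_def using s1 kh by (simp add: hom_iff assoc)
  have "cp C (str C s1) (cp C (idt C S) s1) = cp C (str C s1) (ad (cp C (cp C s2 (str C s2)) s1) (cp C (cp C k (str C k)) s1))"
    unfolding PC[symmetric] using ad_cp_r[OF p2 pk s1] by simp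
  also have "\<dots> = ad (cp C (str C f) f) (cp C (str C y) y)"
    using ad_cp_l[OF cp_hom[OF s1 p2] cp_hom[OF s1 pk] s1h] a b by simp
  finally have "ad (cp C (str C f) f) (cp C (str C y) y) = idt C X" using s11 s1 by (simp add: hom_iff)
  then show ?thesis using yh by blast
qed

lemma partE:
  assumes f: "f \<in> hom C X Y" and cd: "codilation C f S s1 s2" and cop: "is_coproduct C X Y S s1 s2"
  shows "codilator C f S s1 s2"
  unfolding codilator_def
proof (intro conjI allI impI cd)
  have X: "X \<in> Ob C" and Y: "Y \<in> Ob C" and df: "dom C f = X" "cod C f = Y" using f by (auto simp: hom_iff)
  have s1: "s1 \<in> hom C X S" and s2: "s2 \<in> hom C Y S" and i1: "isometry C s1" and i2: "isometry C s2"
    and fe: "cp C (str C s2) s1 = f"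
    using cd unfolding codilation_def df by auto
  have SO: "S \<in> Ob C" using s1 by (auto simp: hom_iff)
  fix T t1 t2 assume ct: "codilation C f T t1 t2"
  have t1: "t1 \<in> hom C X T" and t2: "t2 \<in> hom C Y T" and j1: "isometry C t1" and j2: "isometry C t2"
    and fe': "cp C (str C t2) t1 = f"
    using ct unfolding codilation_def df by auto
  obtain t where t: "t \<in> hom C S T" "cp C t s1 = t1" "cp C t s2 = t2"
    using coprod_D(4)[OF cop t1 t2] by blast
  have tt: "cp C (str C t) t \<in> hom C S S" using cp_hom[OF t(1) st_hom[OF t(1)]] .
  have ent: "cp C (str C si) (cp C (cp C (str C t) t) sj) = cp C (str C (cp C t si)) (cp C t sj)"
    if "si \<in> hom C A S" "sj \<in> hom C B S" for si sj A B
    using that t(1) by (simp add: hom_iff assoc)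
  have fs: "str C f = cp C (str C s1) s2" using fe s1 s2 by (auto simp: hom_iff)
  have fs': "str C f = cp C (str C t1) t2" using fe' t1 t2 by (auto simp: hom_iff)
  have c1: "cp C (cp C (str C t) t) s1 = s1"
  proof (rule coprod_ext_st[OF cop cp_hom[OF s1 tt] s1])
    show "cp C (str C s1) (cp C (cp C (str C t) t) s1) = cp C (str C s1) s1"
      unfolding ent[OF s1 s1] t(2) using isoD[OF j1 t1] isoD[OF i1 s1] by simp
    show "cp C (str C s2) (cp C (cp C (str C t) t) s1) = cp C (str C s2) s1"
      unfolding ent[OF s2 s1] t(2,3) using fe fe' by simp
  qed
  have c2: "cp C (cp C (str C t) t) s2 = s2"
  proof (rule coprod_ext_st[OF cop cp_hom[OF s2 tt] s2])
    show "cp C (str C s1) (cp C (cp C (str C t) t) s2) = cp C (str C s1) s2"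
      unfolding ent[OF s1 s2] t(2,3) using fs fs' by simp
    show "cp C (str C s2) (cp C (cp C (str C t) t) s2) = cp C (str C s2) s2"
      unfolding ent[OF s2 s2] t(3) using isoD[OF j2 t2] isoD[OF i2 s2] by simp
  qed
  have "cp C (str C t) t = idt C S"
    apply (rule coprod_ext[OF cop tt id_hom[OF SO]]) using c1 c2 s1 s2 by (simp_all add: hom_iff)
  then have it: "isometry C t" unfolding isometry_def using t(1) by (simp add: hom_iff)
  have uq: "\<And>t'. t' \<in> hom C S T \<Longrightarrow> cp C t' s1 = t1 \<Longrightarrow> cp C t' s2 = t2 \<Longrightarrow> t' = t"
    using coprod_ext[OF cop _ t(1)] t by simp
  show "\<exists>!t. t \<in> hom C S T \<and> isometry C t \<and> cp C t s1 = t1 \<and> cp C t s2 = t2"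
    using t it uq by blast
qed

lemma bp_entries:
  assumes B: "is_biproduct C A B P s1 r1 s2 r2" and a: "a \<in> hom C P P" and b: "b \<in> hom C P P"
    and e11: "cp C r1 (cp C a s1) = cp C r1 (cp C b s1)" and e21: "cp C r2 (cp C a s1) = cp C r2 (cp C b s1)"
    and e12: "cp C r1 (cp C a s2) = cp C r1 (cp C b s2)" and e22: "cp C r2 (cp C a s2) = cp C r2 (cp C b s2)"
  shows "a = b"
proof -
  note bb = bp_basic[OF B]
  have 1: "cp C a s1 = cp C b s1" using bp_ext_l[OF B cp_hom[OF bb(2) a] cp_hom[OF bb(2) b] e11 e21] .
  have 2: "cp C a s2 = cp C b s2" using bp_ext_l[OF B cp_hom[OF bb(3) a] cp_hom[OF bb(3) b] e12 e22] .
  show ?thesis using bp_ext_r[OF B a b 1 2] .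
qed

lemma partC:
  assumes f: "f \<in> hom C X Y" and sc: "strictly_contractive C f"
    and OB: "ortho_biproduct C X Y P s1 r1 s2 r2" and m: "m \<in> hom C P P"
    and e11: "cp C r1 (cp C m s1) = idt C X" and e12: "cp C r1 (cp C m s2) = str C f"
    and e21: "cp C r2 (cp C m s1) = f" and e22: "cp C r2 (cp C m s2) = idt C Y"
  shows "herm_lt C (zero C P P) m"
proof -
  have X: "X \<in> Ob C" and Y: "Y \<in> Ob C" and df: "dom C f = X" "cod C f = Y" using f by (auto simp: hom_iff)
  obtain W y where y: "y \<in> hom C X W" "ad (cp C (str C f) f) (cp C (str C y) y) = idt C X" "invertible C (cp C (str C y) y)"
    using sc SC_char[OF f] by blast
  obtain S u1 u2 where cd: "codilation C f S u1 u2" and cop: "is_coproduct C X Y S u1 u2"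
    using partA[OF f y] by blast
  have u1: "u1 \<in> hom C X S" and u2: "u2 \<in> hom C Y S" and j1: "isometry C u1" and j2: "isometry C u2"
    and fe: "cp C (str C u2) u1 = f"
    using cd unfolding codilation_def df by auto
  have B: "is_biproduct C X Y P s1 r1 s2 r2" and r: "r1 = str C s1" "r2 = str C s2"
    using OB unfolding ortho_biproduct_def by auto
  note bb = bp_basic[OF B]
  have PO: "P \<in> Ob C" using bb by simp
  obtain z where z: "z \<in> hom C P S" "cp C z s1 = u1" "cp C z s2 = u2" using bp_copair[OF B u1 u2] by blast
  have zz: "cp C (str C z) z \<in> hom C P P" using cp_hom[OF z(1) st_hom[OF z(1)]] .
  have ent: "cp C (str C si) (cp C (cp C (str C z) z) sj) = cp C (str C (cp C z si)) (cp C z sj)"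
    if "si \<in> hom C A P" "sj \<in> hom C B' P" for si sj A B'
    using that z(1) by (simp add: hom_iff assoc)
  have fs: "str C f = cp C (str C u1) u2" using fe u1 u2 by (auto simp: hom_iff)
  have mz: "m = cp C (str C z) z"
    apply (rule bp_entries[OF B m zz])
    unfolding r ent[OF bb(2) bb(2)] ent[OF bb(2) bb(3)] ent[OF bb(3) bb(2)] ent[OF bb(3) bb(3)] z(2,3)
    using e11 e12 e21 e22 isoD[OF j1 u1] isoD[OF j2 u2] fe fs unfolding r by simp_all
  obtain zi where zi: "zi \<in> hom C S P" "cp C zi u1 = s1" "cp C zi u2 = s2"
    using coprod_D(4)[OF cop bb(2) bb(3)] by blast
  have zi1: "cp C zi z = idt C P"
    apply (rule bp_ext_r[OF B cp_hom[OF z(1) zi(1)] id_hom[OF PO]])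
    using assoc_h[OF bb(2) z(1) zi(1)] assoc_h[OF bb(3) z(1) zi(1)] z zi bb by (simp_all add: hom_iff)
  have SO: "S \<in> Ob C" using z(1) by (auto simp: hom_iff)
  have zi2: "cp C z zi = idt C S"
    apply (rule coprod_ext[OF cop cp_hom[OF zi(1) z(1)] id_hom[OF SO]])
    using assoc_h[OF u1 zi(1) z(1)] assoc_h[OF u2 zi(1) z(1)] z zi u1 u2 by (simp_all add: hom_iff)
  define w where "w = cp C zi (str C zi)"
  have wh: "w \<in> hom C P P" unfolding w_def using cp_hom[OF st_hom[OF zi(1)] zi(1)] .
  have w1: "cp C w (cp C (str C z) z) = idt C P"
  proof -
    have "cp C w (cp C (str C z) z) = cp C zi (cp C (str C (cp C z zi)) z)"
      unfolding w_def using zi(1) z(1) by (simp add: hom_iff assoc)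
    also have "\<dots> = idt C P" unfolding zi2 using SO z(1) zi1 by (simp add: hom_iff)
    finally show ?thesis .
  qed
  have w2: "cp C (cp C (str C z) z) w = idt C P"
  proof -
    have "cp C (cp C (str C z) z) w = cp C (str C z) (cp C (cp C z zi) (str C zi))"
      unfolding w_def using zi(1) z(1) by (simp add: hom_iff assoc)
    also have "\<dots> = cp C (str C z) (str C zi)" unfolding zi2 using zi(1) by (simp add: hom_iff)
    also have "\<dots> = str C (cp C zi z)" using zi(1) z(1) by (simp add: hom_iff)
    also have "\<dots> = idt C P" unfolding zi1 using PO by simp
    finally show ?thesis .
  qed
  have inv: "invertible C (cp C (str C z) z)" unfolding inv_iff[OF zz] using wh w1 w2 by blast
  have zh: "zero C P P \<in> hom C P P" using zero_hom[OF PO PO] by simp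
  have dz: "dom C (zero C P P) = P" using PO by simp
  have h1: "hermitian C (zero C P P)" unfolding hermitian_def using zh PO by (simp add: hom_iff)
  have h2: "hermitian C m" unfolding hermitian_def using mz z(1) m by (simp add: hom_iff)
  have dm: "dom C m = P" using m by (simp add: hom_iff)
  have sum: "is_sum C (zero C P P) (cp C (str C z) z) m"
    unfolding is_sum_iff using zh zz ad_zero_l[OF zz] mz by auto
  show ?thesis unfolding herm_lt_def dz dm using h1 h2 z(1) sum inv by blast
qed

lemma partD:
  assumes f: "f \<in> hom C X Y"
    and H: "\<forall>P s1 r1 s2 r2 m. ortho_biproduct C X Y P s1 r1 s2 r2 \<and> m \<in> hom C P P \<and>
               cp C r1 (cp C m s1) = idt C X \<and> cp C r1 (cp C m s2) = str C f \<and>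
               cp C r2 (cp C m s1) = f \<and> cp C r2 (cp C m s2) = idt C Y
               \<longrightarrow> herm_lt C (zero C P P) m"
  shows "strictly_contractive C f"
proof -
  have X: "X \<in> Ob C" and Y: "Y \<in> Ob C" and df: "dom C f = X" "cod C f = Y" using f by (auto simp: hom_iff)
  define P where "P = PP X Y"
  define s1 where "s1 = i1 X Y"
  define s2 where "s2 = i2 X Y"
  define r1 where "r1 = str C s1"
  define r2 where "r2 = str C s2"
  have c: "is_biproduct C X Y P s1 r1 s2 r2" "P \<in> Ob C" "s1 \<in> hom C X P" "s2 \<in> hom C Y P"
    "r1 \<in> hom C P X" "r2 \<in> hom C P Y" "cp C r1 s1 = idt C X" "cp C r2 s2 = idt C Y"
    "cp C r2 s1 = zero C X Y" "cp C r1 s2 = zero C Y X"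
    using cb[OF X Y] unfolding P_def s1_def s2_def r1_def r2_def by auto
  have OB: "ortho_biproduct C X Y P s1 r1 s2 r2"
    using obp[OF X Y] unfolding P_def s1_def s2_def r1_def r2_def .
  have fsh: "str C f \<in> hom C Y X" using st_hom[OF f] .
  have sf: "cp C s2 f \<in> hom C X P" using cp_hom[OF f c(4)] .
  have sf': "cp C s1 (str C f) \<in> hom C Y P" using cp_hom[OF fsh c(3)] .
  define col1 where "col1 = ad s1 (cp C s2 f)"
  define col2 where "col2 = ad (cp C s1 (str C f)) s2"
  have col1h: "col1 \<in> hom C X P" unfolding col1_def using ad_hom[OF c(3) sf] .
  have col2h: "col2 \<in> hom C Y P" unfolding col2_def using ad_hom[OF sf' c(4)] .
  obtain m where m: "m \<in> hom C P P" "cp C m s1 = col1" "cp C m s2 = col2"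
    using bp_copair[OF c(1) col1h col2h] by blast
  have zXX: "zero C X X \<in> hom C X X" and zYY: "zero C Y Y \<in> hom C Y Y" and zXY: "zero C X Y \<in> hom C X Y"
    and zYX: "zero C Y X \<in> hom C Y X" using zero_hom X Y by auto
  have e11: "cp C r1 col1 = idt C X"
    unfolding col1_def ad_cp_l[OF c(3) sf c(5)] assoc_h[OF f c(4) c(5)] c(7,10)
    using f X Y ad_zero_r[OF id_hom[OF X]] by (simp add: hom_iff)
  have e21: "cp C r2 col1 = f"
    unfolding col1_def ad_cp_l[OF c(3) sf c(6)] assoc_h[OF f c(4) c(6)] c(8,9)
    using f X Y ad_zero_l[OF f] by (simp add: hom_iff)
  have e12: "cp C r1 col2 = str C f"
    unfolding col2_def ad_cp_l[OF sf' c(4) c(5)] assoc_h[OF fsh c(3) c(5)] c(7,10)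
    using fsh X Y ad_zero_r[OF fsh] by (simp add: hom_iff)
  have e22: "cp C r2 col2 = idt C Y"
    unfolding col2_def ad_cp_l[OF sf' c(4) c(6)] assoc_h[OF fsh c(3) c(6)] c(8,9)
    using fsh X Y ad_zero_l[OF id_hom[OF Y]] by (simp add: hom_iff)
  have "herm_lt C (zero C P P) m" using H OB m e11 e12 e21 e22 by blast
  then obtain W z where z: "z \<in> hom C P W" "is_sum C (zero C P P) (cp C (str C z) z) m"
      "invertible C (cp C (str C z) z)"
    unfolding herm_lt_def using c(2) by auto
  have zz: "cp C (str C z) z \<in> hom C P P" using cp_hom[OF z(1) st_hom[OF z(1)]] .
  have mz: "m = cp C (str C z) z" using z(2) unfolding is_sum_iff using ad_zero_l[OF zz] by simp
  obtain mi where mi: "mi \<in> hom C P P" "cp C mi m = idt C P" "cp C m mi = idt C P"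
    using z(3) inv_iff[OF zz] unfolding mz[symmetric] by blast
  have fr2: "cp C (str C f) r2 \<in> hom C P X" using cp_hom[OF c(6) fsh] .
  have fr1: "cp C f r1 \<in> hom C P Y" using cp_hom[OF c(5) f] .
  have R1: "cp C r1 m = ad r1 (cp C (str C f) r2)"
  proof (rule bp_ext_r[OF c(1) cp_hom[OF m(1) c(5)] ad_hom[OF c(5) fr2]])
    show "cp C (cp C r1 m) s1 = cp C (ad r1 (cp C (str C f) r2)) s1"
      unfolding ad_cp_r[OF c(5) fr2 c(3)] assoc_h[OF c(3) m(1) c(5), symmetric] assoc_h[OF c(3) c(6) fsh, symmetric]
        m(2) e11 c(7,9) using fsh X Y ad_zero_r[OF id_hom[OF X]] by (simp add: hom_iff)
    show "cp C (cp C r1 m) s2 = cp C (ad r1 (cp C (str C f) r2)) s2"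
      unfolding ad_cp_r[OF c(5) fr2 c(4)] assoc_h[OF c(4) m(1) c(5), symmetric] assoc_h[OF c(4) c(6) fsh, symmetric]
        m(3) e12 c(8,10) using fsh X Y ad_zero_l[OF fsh] by (simp add: hom_iff)
  qed
  have R2: "cp C r2 m = ad (cp C f r1) r2"
  proof (rule bp_ext_r[OF c(1) cp_hom[OF m(1) c(6)] ad_hom[OF fr1 c(6)]])
    show "cp C (cp C r2 m) s1 = cp C (ad (cp C f r1) r2) s1"
      unfolding ad_cp_r[OF fr1 c(6) c(3)] assoc_h[OF c(3) m(1) c(6), symmetric] assoc_h[OF c(3) c(5) f, symmetric]
        m(2) e21 c(7,9) using f X Y ad_zero_r[OF f] by (simp add: hom_iff)
    show "cp C (cp C r2 m) s2 = cp C (ad (cp C f r1) r2) s2"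
      unfolding ad_cp_r[OF fr1 c(6) c(4)] assoc_h[OF c(4) m(1) c(6), symmetric] assoc_h[OF c(4) c(5) f, symmetric]
        m(3) e22 c(8,10) using f X Y ad_zero_l[OF id_hom[OF Y]] by (simp add: hom_iff)
  qed
  have ms1: "cp C mi s1 \<in> hom C X P" and ms2: "cp C mi s2 \<in> hom C Y P" using cp_hom mi(1) c(3,4) by blast+
  define a where "a = cp C r1 (cp C mi s1)"
  define cc where "cc = cp C r2 (cp C mi s1)"
  define b where "b = cp C r1 (cp C mi s2)"
  have ah: "a \<in> hom C X X" unfolding a_def using cp_hom[OF ms1 c(5)] .
  have cch: "cc \<in> hom C X Y" unfolding cc_def using cp_hom[OF ms1 c(6)] .
  have bh: "b \<in> hom C Y X" unfolding b_def using cp_hom[OF ms2 c(5)] .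
  have Eq1: "ad a (cp C (str C f) cc) = idt C X"
  proof -
    have "cp C (cp C r1 m) (cp C mi s1) = cp C r1 (cp C (cp C m mi) s1)"
      using m(1) mi(1) c(3,5) by (simp add: hom_iff assoc)
    also have "\<dots> = idt C X" unfolding mi(3) using c(3,7) by (simp add: hom_iff)
    finally have "cp C (ad r1 (cp C (str C f) r2)) (cp C mi s1) = idt C X" unfolding R1 .
    then show ?thesis unfolding ad_cp_r[OF c(5) fr2 ms1] a_def cc_def assoc_h[OF ms1 c(6) fsh, symmetric] .
  qed
  have Eq2: "ad (cp C f a) cc = zero C X Y"
  proof -
    have "cp C (cp C r2 m) (cp C mi s1) = cp C r2 (cp C (cp C m mi) s1)"
      using m(1) mi(1) c(3,6) by (simp add: hom_iff assoc)
    also have "\<dots> = zero C X Y" unfolding mi(3) using c(3,9) by (simp add: hom_iff)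
    finally have "cp C (ad (cp C f r1) r2) (cp C mi s1) = zero C X Y" unfolding R2 .
    then show ?thesis unfolding ad_cp_r[OF fr1 c(6) ms1] a_def cc_def assoc_h[OF ms1 c(5) f, symmetric] .
  qed
  have ccv: "cc = ng (cp C f a)" using ng_unique[OF cp_hom[OF ah f] cch Eq2] .
  have Eq3: "ad a (cp C b f) = idt C X"
  proof -
    have "cp C r1 (cp C mi (cp C m s1)) = cp C r1 (cp C (cp C mi m) s1)"
      using m(1) mi(1) c(3,5) by (simp add: hom_iff assoc)
    also have "\<dots> = idt C X" unfolding mi(2) using c(3,7) by (simp add: hom_iff)
    finally have "cp C r1 (cp C mi col1) = idt C X" unfolding m(2) .
    then show ?thesis unfolding col1_def ad_cp_l[OF c(3) sf mi(1)] ad_cp_l[OF ms1 cp_hom[OF sf mi(1)] c(5)]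
      a_def b_def using assoc_h[OF f c(4) mi(1)] assoc_h[OF f ms2 c(5)] by simp
  qed
  have Eq4: "ad (cp C a (str C f)) b = zero C Y X"
  proof -
    have "cp C r1 (cp C mi (cp C m s2)) = cp C r1 (cp C (cp C mi m) s2)"
      using m(1) mi(1) c(4,5) by (simp add: hom_iff assoc)
    also have "\<dots> = zero C Y X" unfolding mi(2) using c(4,10) by (simp add: hom_iff)
    finally have "cp C r1 (cp C mi col2) = zero C Y X" unfolding m(3) .
    then show ?thesis unfolding col2_def ad_cp_l[OF sf' c(4) mi(1)] ad_cp_l[OF cp_hom[OF sf' mi(1)] ms2 c(5)]
      a_def b_def using assoc_h[OF fsh c(3) mi(1)] assoc_h[OF fsh ms1 c(5)] by simp
  qed
  have bv: "b = ng (cp C a (str C f))" using ng_unique[OF cp_hom[OF fsh ah] bh Eq4] .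
  define ff where "ff = cp C (str C f) f"
  have ffh: "ff \<in> hom C X X" unfolding ff_def using cp_hom[OF f fsh] .
  define Dm where "Dm = ad (idt C X) (ng ff)"
  have Dmh: "Dm \<in> hom C X X" unfolding Dm_def using ad_hom[OF id_hom[OF X] ng_hom[OF ffh]] .
  have Da: "cp C Dm a = idt C X"
  proof -
    have "cp C Dm a = ad a (ng (cp C ff a))"
      unfolding Dm_def ad_cp_r[OF id_hom[OF X] ng_hom[OF ffh] ah] ng_cp_r[OF ffh ah] using ah by (simp add: hom_iff)
    also have "ng (cp C ff a) = cp C (str C f) cc"
      unfolding ccv ff_def ng_cp_l[OF cp_hom[OF ah f] fsh] using assoc_h[OF ah f fsh] by simp
    finally show ?thesis using Eq1 by simp
  qed
  have aD: "cp C a Dm = idt C X"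
  proof -
    have "cp C a Dm = ad a (ng (cp C a ff))"
      unfolding Dm_def ad_cp_l[OF id_hom[OF X] ng_hom[OF ffh] ah] ng_cp_l[OF ffh ah] using ah by (simp add: hom_iff)
    also have "ng (cp C a ff) = cp C b f"
      unfolding bv ff_def ng_cp_r[OF cp_hom[OF fsh ah] f] using assoc_h[OF f fsh ah] by simp
    finally show ?thesis using Eq3 by simp
  qed
  define v1 where "v1 = cp C z s1"
  define v2 where "v2 = cp C z s2"
  have v1h: "v1 \<in> hom C X W" unfolding v1_def using cp_hom[OF c(3) z(1)] .
  have v2h: "v2 \<in> hom C Y W" unfolding v2_def using cp_hom[OF c(4) z(1)] .
  have ent: "cp C (str C (cp C z si)) (cp C z sj) = cp C (str C si) (cp C m sj)"
    if "si \<in> hom C A P" "sj \<in> hom C B P" for si sj A B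
    unfolding mz using that z(1) by (simp add: hom_iff assoc)
  have v11: "cp C (str C v1) v1 = idt C X" unfolding v1_def ent[OF c(3) c(3)] m(2)
    using e11 unfolding r1_def .
  have v22: "cp C (str C v2) v2 = idt C Y" unfolding v2_def ent[OF c(4) c(4)] m(3)
    using e22 unfolding r2_def .
  have v21: "cp C (str C v2) v1 = f" unfolding v1_def v2_def ent[OF c(4) c(3)] m(2)
    using e21 unfolding r2_def .
  have i1: "isometry C v1" unfolding isometry_def using v11 v1h by (simp add: hom_iff)
  have i2: "isometry C v2" unfolding isometry_def using v22 v2h by (simp add: hom_iff)
  obtain K y where y: "y \<in> hom C X K" "ad ff (cp C (str C y) y) = idt C X"
    using codil_y[OF f v1h v2h i1 i2 v21] unfolding ff_def by blast
  have yy: "cp C (str C y) y \<in> hom C X X" using cp_hom[OF y(1) st_hom[OF y(1)]] .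
  have "cp C (str C y) y = Dm"
    unfolding Dm_def using ad_move[OF yy ffh id_hom[OF X]] ad_comm[OF yy ffh] y(2) by simp
  then have "invertible C (cp C (str C y) y)" unfolding inv_iff[OF yy] using ah Da aD by blast
  then show ?thesis using SC_char[OF f] y unfolding ff_def by blast
qed

end

theorem theorem7p19:
  fixes C :: "('o, 'm) scat" and f :: 'm and X Y :: 'o
  assumes "pre_hilbert C"
    and "f \<in> hom C X Y"
  shows "(strictly_contractive C f \<longleftrightarrow>
            (\<exists>S s1 s2. codilation C f S s1 s2 \<and> is_coproduct C X Y S s1 s2))
       \<and> (strictly_contractive C f \<longleftrightarrow>
            (\<forall>P s1 r1 s2 r2 m. ortho_biproduct C X Y P s1 r1 s2 r2 \<and> m \<in> hom C P P \<and>
               cp C r1 (cp C m s1) = idt C X \<and> cp C r1 (cp C m s2) = str C f \<and>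
               cp C r2 (cp C m s1) = f \<and> cp C r2 (cp C m s2) = idt C Y
               \<longrightarrow> herm_lt C (zero C P P) m))
       \<and> (strictly_contractive C f \<longrightarrow>
            (\<forall>S s1 s2. codilation C f S s1 s2 \<and> is_coproduct C X Y S s1 s2
               \<longrightarrow> codilator C f S s1 s2))"
proof -
  interpret phc C using assms(1) by unfold_locales
  have f: "f \<in> hom C X Y" using assms(2) .
  show ?thesis
  proof (intro conjI)
    show "strictly_contractive C f \<longleftrightarrow>
            (\<exists>S s1 s2. codilation C f S s1 s2 \<and> is_coproduct C X Y S s1 s2)"
    proof
      assume "strictly_contractive C f"
      then obtain W y where y: "y \<in> hom C X W" "ad (cp C (str C f) f) (cp C (str C y) y) = idt C X"
          "invertible C (cp C (str C y) y)"
        using SC_char[OF f] by blast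
      show "\<exists>S s1 s2. codilation C f S s1 s2 \<and> is_coproduct C X Y S s1 s2" using partA[OF f y] .
    next
      assume "\<exists>S s1 s2. codilation C f S s1 s2 \<and> is_coproduct C X Y S s1 s2"
      then obtain S s1 s2 where "codilation C f S s1 s2" "is_coproduct C X Y S s1 s2" by blast
      then show "strictly_contractive C f" using partB[OF f] SC_char[OF f] by blast
    qed
    show "strictly_contractive C f \<longleftrightarrow>
            (\<forall>P s1 r1 s2 r2 m. ortho_biproduct C X Y P s1 r1 s2 r2 \<and> m \<in> hom C P P \<and>
               cp C r1 (cp C m s1) = idt C X \<and> cp C r1 (cp C m s2) = str C f \<and>
               cp C r2 (cp C m s1) = f \<and> cp C r2 (cp C m s2) = idt C Y
               \<longrightarrow> herm_lt C (zero C P P) m)"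
    proof
      assume sc: "strictly_contractive C f"
      show "\<forall>P s1 r1 s2 r2 m. ortho_biproduct C X Y P s1 r1 s2 r2 \<and> m \<in> hom C P P \<and>
               cp C r1 (cp C m s1) = idt C X \<and> cp C r1 (cp C m s2) = str C f \<and>
               cp C r2 (cp C m s1) = f \<and> cp C r2 (cp C m s2) = idt C Y
               \<longrightarrow> herm_lt C (zero C P P) m"
        using partC[OF f sc] by blast
    next
      assume H: "\<forall>P s1 r1 s2 r2 m. ortho_biproduct C X Y P s1 r1 s2 r2 \<and> m \<in> hom C P P \<and>
               cp C r1 (cp C m s1) = idt C X \<and> cp C r1 (cp C m s2) = str C f \<and>
               cp C r2 (cp C m s1) = f \<and> cp C r2 (cp C m s2) = idt C Y
               \<longrightarrow> herm_lt C (zero C P P) m"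
      show "strictly_contractive C f" using partD[OF f H] .
    qed
    show "strictly_contractive C f \<longrightarrow>
            (\<forall>S s1 s2. codilation C f S s1 s2 \<and> is_coproduct C X Y S s1 s2
               \<longrightarrow> codilator C f S s1 s2)"
      using partE[OF f] by blast
  qed
qed

end
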